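(* Let $\mathscr V,\mathscr W$ be monoidal categories and $\mathscr C$ a $\mathscr V$-$\mathscr W$-bigraded category. (1) For every left $\mathscr V$-graded category $\mathscr A$, there is a right $\mathscr W$-graded category ${}^{\mathscr V}[\mathscr A,\mathscr C]_{\mathscr W}$ whose objects are the left $\mathscr V$-graded functors $\mathscr A\to{}_{\mathscr V}\mathscr C$, whose graded morphisms of grade $X'$ from $F$ to $G$ are the graded transformations $\phi\colon F\,'\,X'\Rightarrow G$, with composition and reindexing defined pointwise in $\mathscr C_{\mathscr W}$ (i.e. $(\psi\circ\phi)_A=\psi_A\circ\phi_A$ and $(\beta^*\phi)_A=\beta^*(\phi_A)$ in $\mathscr C_{\mathscr W}$) and identities $(\mathsf i_{FA})_A$. (2) Dually, for every right $\mathscr W$-graded category $\mathscr B$, there is a left $\mathscr V$-graded category ${}_{\mathscr V}[\mathscr B,\mathscr C]^{\mathscr W}$ whose objects are right $\mathscr W$-graded functors $\mathscr B\to\mathscr C_{\mathscr W}$, whose grade-$X$ morphisms $F\to G$ are families $\phi_B\in\mathscr C_{(X,I)}(FB,GB)$ ($B\in\mathrm{ob}\,\mathscr B$) such that for every $g\in\mathscr B_{X'}(B,B')$, $(\phi_B,\phi_{B'},Fg,Gg)$ is an $(X,X')$-bigraded square, with pointwise composition and reindexing in ${}_{\mathscr V}\mathscr C$.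
   Context: $\mathscr V,\mathscr W$ monoidal (structure $\otimes,I,a,\ell,r$); $\mathscr W^{\mathrm{rev}}$ has $X\otimes_{\mathrm{rev}}Y=Y\otimes X$. For a monoidal $\mathscr U$, a left $\mathscr U$-graded category has objects, sets $\mathscr C_X(A,B)$, reindexings $\alpha^*f\in\mathscr C_Y(A,B)$ along $\alpha\colon Y\to X$, composites $g\circ f\in\mathscr C_{Y\otimes X}(A,C)$, identities $\mathsf i_A\in\mathscr C_I(A,A)$, with functorial reindexing, $\beta^*g\circ\alpha^*f=(\beta\otimes\alpha)^*(g\circ f)$, $(h\circ g)\circ f=a^*(h\circ(g\circ f))$, $f\circ\mathsf i_A=r_X^*f$, $\mathsf i_B\circ f=\ell_X^*f$; graded functors preserve all this. A right $\mathscr W$-graded category is a left $\mathscr W^{\mathrm{rev}}$-graded one (composite of grades $X'$ then $Y'$ has grade $X'\otimes Y'$). A $\mathscr V$-$\mathscr W$-bigraded category $\mathscr C$ is a left $(\mathscr V\times\mathscr W^{\mathrm{rev}})$-graded category: sets $\mathscr C_{(X,X')}(A,B)$, $g\circ f\in\mathscr C_{(Y\otimes X,X'\otimes Y')}$. Its underlying left $\mathscr V$-graded ${}_{\mathscr V}\mathscr C$: $\mathscr C_{(X,I)}(A,B)$, reindexing $(\alpha,1_I)^*$, composition $(1,\ell_I^{-1})^*(g\circ f)$, identities $\mathsf i_A$; underlying right $\mathscr W$-graded $\mathscr C_{\mathscr W}$: $\mathscr C_{(I,X')}(A,B)$, reindexing $(1_I,\beta)^*$, composition $(\ell_I^{-1},1)^*(\psi\circ\varphi)$,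 identities $\mathsf i_A$. An $(X,X')$-bigraded square is $(f,g,\varphi,\varphi')$ with $f\in\mathscr C_{(X,I)}(A,A')$, $g\in\mathscr C_{(X,I)}(B,B')$, $\varphi\in\mathscr C_{(I,X')}(A,B)$, $\varphi'\in\mathscr C_{(I,X')}(A',B')$ and $(r_X^{-1},r_{X'}^{-1})^*(g\circ\varphi)=(\ell_X^{-1},\ell_{X'}^{-1})^*(\varphi'\circ f)$. For left $\mathscr V$-graded functors $F,G\colon\mathscr A\to{}_{\mathscr V}\mathscr C$ and $X'\in\mathscr W$, a graded transformation $\phi\colon F\,'\,X'\Rightarrow G$ is a family $\phi_A\in\mathscr C_{(I,X')}(FA,GA)$ such that $(Ff,Gf,\phi_A,\phi_B)$ is an $(X,X')$-bigraded square for every $f\in\mathscr A_X(A,B)$. *)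

theory Defs
  imports Main
begin

record ('o, 'm) mcat =
  mOb   :: "'o set"
  mAr   :: "'m set"
  mdom  :: "'m \<Rightarrow> 'o"
  mcod  :: "'m \<Rightarrow> 'o"
  mcomp :: "'m \<Rightarrow> 'm \<Rightarrow> 'm"   (* mcomp g f = g . f *)
  mid   :: "'o \<Rightarrow> 'm"
  mtO   :: "'o \<Rightarrow> 'o \<Rightarrow> 'o"
  mtM   :: "'m \<Rightarrow> 'm \<Rightarrow> 'm"
  munit :: "'o"
  masc  :: "'o \<Rightarrow> 'o \<Rightarrow> 'o \<Rightarrow> 'm"  (* a_{X,Y,Z} : (X*Y)*Z -> X*(Y*Z) *)
  mlu   :: "'o \<Rightarrow> 'm"   (* l_X : I*X -> X *)
  mru   :: "'o \<Rightarrow> 'm"   (* r_X : X*I -> X *)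

definition mhom :: "('o, 'm) mcat \<Rightarrow> 'o \<Rightarrow> 'o \<Rightarrow> 'm set" where
  "mhom M X Y = {f \<in> mAr M. mdom M f = X \<and> mcod M f = Y}"

definition category :: "('o, 'm) mcat \<Rightarrow> bool" where
  "category M \<longleftrightarrow>
    (\<forall>f\<in>mAr M. mdom M f \<in> mOb M \<and> mcod M f \<in> mOb M) \<and>
    (\<forall>X\<in>mOb M. mid M X \<in> mhom M X X) \<and>
    (\<forall>f\<in>mAr M. \<forall>g\<in>mAr M. mcod M f = mdom M g \<longrightarrow>
        mcomp M g f \<in> mhom M (mdom M f) (mcod M g)) \<and>
    (\<forall>f\<in>mAr M. \<forall>g\<in>mAr M. \<forall>h\<in>mAr M. mcod M f = mdom M g \<longrightarrow> mcod M g = mdom M h \<longrightarrow>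
        mcomp M h (mcomp M g f) = mcomp M (mcomp M h g) f) \<and>
    (\<forall>f\<in>mAr M. mcomp M f (mid M (mdom M f)) = f \<and> mcomp M (mid M (mcod M f)) f = f)"

definition miso :: "('o, 'm) mcat \<Rightarrow> 'm \<Rightarrow> bool" where
  "miso M f \<longleftrightarrow> f \<in> mAr M \<and>
    (\<exists>g\<in>mhom M (mcod M f) (mdom M f).
        mcomp M g f = mid M (mdom M f) \<and> mcomp M f g = mid M (mcod M f))"

definition minv :: "('o, 'm) mcat \<Rightarrow> 'm \<Rightarrow> 'm" where
  "minv M f = (SOME g. g \<in> mhom M (mcod M f) (mdom M f) \<and>
        mcomp M g f = mid M (mdom M f) \<and> mcomp M f g = mid M (mcod M f))"

definition monoidal_cat :: "('o, 'm) mcat \<Rightarrow> bool" where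
  "monoidal_cat M \<longleftrightarrow> category M \<and>
    munit M \<in> mOb M \<and>
    (\<forall>X\<in>mOb M. \<forall>Y\<in>mOb M. mtO M X Y \<in> mOb M) \<and>
    (\<forall>f\<in>mAr M. \<forall>g\<in>mAr M.
        mtM M f g \<in> mhom M (mtO M (mdom M f) (mdom M g)) (mtO M (mcod M f) (mcod M g))) \<and>
    (\<forall>X\<in>mOb M. \<forall>Y\<in>mOb M. mtM M (mid M X) (mid M Y) = mid M (mtO M X Y)) \<and>
    (\<forall>f\<in>mAr M. \<forall>g\<in>mAr M. \<forall>f'\<in>mAr M. \<forall>g'\<in>mAr M.
        mcod M f = mdom M g \<longrightarrow> mcod M f' = mdom M g' \<longrightarrow>
        mtM M (mcomp M g f) (mcomp M g' f') = mcomp M (mtM M g g') (mtM M f f')) \<and>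
    (\<forall>X\<in>mOb M. \<forall>Y\<in>mOb M. \<forall>Z\<in>mOb M.
        masc M X Y Z \<in> mhom M (mtO M (mtO M X Y) Z) (mtO M X (mtO M Y Z)) \<and>
        miso M (masc M X Y Z)) \<and>
    (\<forall>X\<in>mOb M. mlu M X \<in> mhom M (mtO M (munit M) X) X \<and> miso M (mlu M X)) \<and>
    (\<forall>X\<in>mOb M. mru M X \<in> mhom M (mtO M X (munit M)) X \<and> miso M (mru M X)) \<and>
    (\<forall>f\<in>mAr M. \<forall>g\<in>mAr M. \<forall>h\<in>mAr M.
        mcomp M (masc M (mcod M f) (mcod M g) (mcod M h)) (mtM M (mtM M f g) h)
      = mcomp M (mtM M f (mtM M g h)) (masc M (mdom M f) (mdom M g) (mdom M h))) \<and>
    (\<forall>f\<in>mAr M. mcomp M (mlu M (mcod M f)) (mtM M (mid M (munit M)) f)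
               = mcomp M f (mlu M (mdom M f))) \<and>
    (\<forall>f\<in>mAr M. mcomp M (mru M (mcod M f)) (mtM M f (mid M (munit M)))
               = mcomp M f (mru M (mdom M f))) \<and>
    (\<forall>W\<in>mOb M. \<forall>X\<in>mOb M. \<forall>Y\<in>mOb M. \<forall>Z\<in>mOb M.
        mcomp M (mtM M (mid M W) (masc M X Y Z))
          (mcomp M (masc M W (mtO M X Y) Z) (mtM M (masc M W X Y) (mid M Z)))
      = mcomp M (masc M W X (mtO M Y Z)) (masc M (mtO M W X) Y Z)) \<and>
    (\<forall>X\<in>mOb M. \<forall>Y\<in>mOb M.
        mcomp M (mtM M (mid M X) (mlu M Y)) (masc M X (munit M) Y)
      = mtM M (mru M X) (mid M Y))"

definition prodM :: "('o1, 'm1) mcat \<Rightarrow> ('o2, 'm2) mcat \<Rightarrow> ('o1 \<times> 'o2, 'm1 \<times> 'm2) mcat" where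
  "prodM M N = \<lparr>
     mOb = mOb M \<times> mOb N,
     mAr = mAr M \<times> mAr N,
     mdom = (\<lambda>(f, f'). (mdom M f, mdom N f')),
     mcod = (\<lambda>(f, f'). (mcod M f, mcod N f')),
     mcomp = (\<lambda>(g, g') (f, f'). (mcomp M g f, mcomp N g' f')),
     mid = (\<lambda>(X, X'). (mid M X, mid N X')),
     mtO = (\<lambda>(X, X') (Y, Y'). (mtO M X Y, mtO N X' Y')),
     mtM = (\<lambda>(f, f') (g, g'). (mtM M f g, mtM N f' g')),
     munit = (munit M, munit N),
     masc = (\<lambda>(X, X') (Y, Y') (Z, Z'). (masc M X Y Z, masc N X' Y' Z')),
     mlu = (\<lambda>(X, X'). (mlu M X, mlu N X')),
     mru = (\<lambda>(X, X'). (mru M X, mru N X')) \<rparr>"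

definition revM :: "('o, 'm) mcat \<Rightarrow> ('o, 'm) mcat" where
  "revM M = \<lparr>
     mOb = mOb M, mAr = mAr M, mdom = mdom M, mcod = mcod M,
     mcomp = mcomp M, mid = mid M,
     mtO = (\<lambda>X Y. mtO M Y X),
     mtM = (\<lambda>f g. mtM M g f),
     munit = munit M,
     masc = (\<lambda>X Y Z. minv M (masc M Z Y X)),
     mlu = mru M,
     mru = mlu M \<rparr>"

text \<open>Grades are objects of a monoidal category with object type 'o and arrow type 'm.
  gHom X A B = C_X(A,B); gre alpha A B f = alpha^* f (alpha : Y -> X, f in C_X(A,B));
  gcmp Y X A B C g f = g o f for f in C_X(A,B), g in C_Y(B,C); gid A = i_A.\<close>

record ('o, 'm, 'c, 'h) gcat =
  gOb  :: "'c set"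
  gHom :: "'o \<Rightarrow> 'c \<Rightarrow> 'c \<Rightarrow> 'h set"
  gre  :: "'m \<Rightarrow> 'c \<Rightarrow> 'c \<Rightarrow> 'h \<Rightarrow> 'h"
  gcmp :: "'o \<Rightarrow> 'o \<Rightarrow> 'c \<Rightarrow> 'c \<Rightarrow> 'c \<Rightarrow> 'h \<Rightarrow> 'h \<Rightarrow> 'h"
  gid  :: "'c \<Rightarrow> 'h"

definition graded_cat :: "('o, 'm) mcat \<Rightarrow> ('o, 'm, 'c, 'h) gcat \<Rightarrow> bool" where
  "graded_cat U C \<longleftrightarrow>
    (\<forall>\<alpha>\<in>mAr U. \<forall>A\<in>gOb C. \<forall>B\<in>gOb C. \<forall>f\<in>gHom C (mcod U \<alpha>) A B.
        gre C \<alpha> A B f \<in> gHom C (mdom U \<alpha>) A B) \<and>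
    (\<forall>X\<in>mOb U. \<forall>A\<in>gOb C. \<forall>B\<in>gOb C. \<forall>f\<in>gHom C X A B.
        gre C (mid U X) A B f = f) \<and>
    (\<forall>\<alpha>\<in>mAr U. \<forall>\<beta>\<in>mAr U. mcod U \<beta> = mdom U \<alpha> \<longrightarrow>
      (\<forall>A\<in>gOb C. \<forall>B\<in>gOb C. \<forall>f\<in>gHom C (mcod U \<alpha>) A B.
        gre C (mcomp U \<alpha> \<beta>) A B f = gre C \<beta> A B (gre C \<alpha> A B f))) \<and>
    (\<forall>X\<in>mOb U. \<forall>Y\<in>mOb U. \<forall>A\<in>gOb C. \<forall>B\<in>gOb C. \<forall>D\<in>gOb C.
      \<forall>f\<in>gHom C X A B. \<forall>g\<in>gHom C Y B D.
        gcmp C Y X A B D g f \<in> gHom C (mtO U Y X) A D) \<and>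
    (\<forall>A\<in>gOb C. gid C A \<in> gHom C (munit U) A A) \<and>
    (\<forall>\<alpha>\<in>mAr U. \<forall>\<beta>\<in>mAr U. \<forall>A\<in>gOb C. \<forall>B\<in>gOb C. \<forall>D\<in>gOb C.
      \<forall>f\<in>gHom C (mcod U \<alpha>) A B. \<forall>g\<in>gHom C (mcod U \<beta>) B D.
        gcmp C (mdom U \<beta>) (mdom U \<alpha>) A B D (gre C \<beta> B D g) (gre C \<alpha> A B f)
      = gre C (mtM U \<beta> \<alpha>) A D (gcmp C (mcod U \<beta>) (mcod U \<alpha>) A B D g f)) \<and>
    (\<forall>X\<in>mOb U. \<forall>Y\<in>mOb U. \<forall>Z\<in>mOb U. \<forall>A\<in>gOb C. \<forall>B\<in>gOb C. \<forall>D\<in>gOb C. \<forall>E\<in>gOb C.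
      \<forall>f\<in>gHom C X A B. \<forall>g\<in>gHom C Y B D. \<forall>h\<in>gHom C Z D E.
        gcmp C (mtO U Z Y) X A B E (gcmp C Z Y B D E h g) f
      = gre C (masc U Z Y X) A E (gcmp C Z (mtO U Y X) A D E h (gcmp C Y X A B D g f))) \<and>
    (\<forall>X\<in>mOb U. \<forall>A\<in>gOb C. \<forall>B\<in>gOb C. \<forall>f\<in>gHom C X A B.
        gcmp C X (munit U) A A B f (gid C A) = gre C (mru U X) A B f \<and>
        gcmp C (munit U) X A B B (gid C B) f = gre C (mlu U X) A B f)"

record ('o, 'a, 'c, 'h1, 'h2) gfun =
  fob  :: "'a \<Rightarrow> 'c"
  fmor :: "'o \<Rightarrow> 'a \<Rightarrow> 'a \<Rightarrow> 'h1 \<Rightarrow> 'h2"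

definition graded_functor ::
  "('o, 'm) mcat \<Rightarrow> ('o, 'm, 'a, 'h1) gcat \<Rightarrow> ('o, 'm, 'c, 'h2) gcat
     \<Rightarrow> ('o, 'a, 'c, 'h1, 'h2) gfun \<Rightarrow> bool" where
  "graded_functor U A B F \<longleftrightarrow>
    (\<forall>a\<in>gOb A. fob F a \<in> gOb B) \<and>
    (\<forall>X\<in>mOb U. \<forall>a\<in>gOb A. \<forall>b\<in>gOb A. \<forall>f\<in>gHom A X a b.
        fmor F X a b f \<in> gHom B X (fob F a) (fob F b)) \<and>
    (\<forall>\<alpha>\<in>mAr U. \<forall>a\<in>gOb A. \<forall>b\<in>gOb A. \<forall>f\<in>gHom A (mcod U \<alpha>) a b.
        fmor F (mdom U \<alpha>) a b (gre A \<alpha> a b f)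
      = gre B \<alpha> (fob F a) (fob F b) (fmor F (mcod U \<alpha>) a b f)) \<and>
    (\<forall>X\<in>mOb U. \<forall>Y\<in>mOb U. \<forall>a\<in>gOb A. \<forall>b\<in>gOb A. \<forall>c\<in>gOb A.
      \<forall>f\<in>gHom A X a b. \<forall>g\<in>gHom A Y b c.
        fmor F (mtO U Y X) a c (gcmp A Y X a b c g f)
      = gcmp B Y X (fob F a) (fob F b) (fob F c) (fmor F Y b c g) (fmor F X a b f)) \<and>
    (\<forall>a\<in>gOb A. fmor F (munit U) a a (gid A a) = gid B (fob F a))"

text \<open>A graded functor is determined by its action on objects and on graded morphisms;
  we represent it extensionally (undefined outside its domain).\<close>

definition gfun_ext :: "('o, 'm) mcat \<Rightarrow> ('o, 'm, 'a, 'h1) gcat \<Rightarrow> ('o, 'a, 'c, 'h1, 'h2) gfun \<Rightarrow> bool" where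
  "gfun_ext U A F \<longleftrightarrow>
    (\<forall>a. a \<notin> gOb A \<longrightarrow> fob F a = undefined) \<and>
    (\<forall>X a b f. \<not> (X \<in> mOb U \<and> a \<in> gOb A \<and> b \<in> gOb A \<and> f \<in> gHom A X a b)
        \<longrightarrow> fmor F X a b f = undefined)"

text \<open>A V-W-bigraded category is a left (V x W^rev)-graded category, i.e. a
  graded_cat (prodM V (revM W)).\<close>

definition underV :: "('v, 'vm) mcat \<Rightarrow> ('w, 'wm) mcat \<Rightarrow> ('v \<times> 'w, 'vm \<times> 'wm, 'c, 'h) gcat
    \<Rightarrow> ('v, 'vm, 'c, 'h) gcat" where
  "underV V W C = \<lparr>
     gOb = gOb C,
     gHom = (\<lambda>X. gHom C (X, munit W)),
     gre = (\<lambda>\<alpha>. gre C (\<alpha>, mid W (munit W))),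
     gcmp = (\<lambda>Y X A B D g f.
        gre C (mid V (mtO V Y X), minv W (mlu W (munit W))) A D
          (gcmp C (Y, munit W) (X, munit W) A B D g f)),
     gid = gid C \<rparr>"

definition underW :: "('v, 'vm) mcat \<Rightarrow> ('w, 'wm) mcat \<Rightarrow> ('v \<times> 'w, 'vm \<times> 'wm, 'c, 'h) gcat
    \<Rightarrow> ('w, 'wm, 'c, 'h) gcat" where
  "underW V W C = \<lparr>
     gOb = gOb C,
     gHom = (\<lambda>X'. gHom C (munit V, X')),
     gre = (\<lambda>\<beta>. gre C (mid V (munit V), \<beta>)),
     gcmp = (\<lambda>Y' X' A B D \<psi> \<phi>.
        gre C (minv V (mlu V (munit V)), mid W (mtO W X' Y')) A D
          (gcmp C (munit V, Y') (munit V, X') A B D \<psi> \<phi>)),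
     gid = gid C \<rparr>"

text \<open>(X,X')-bigraded square (f, g, phi, phi') with f : A -> A', g : B -> B',
  phi : A -> B, phi' : A' -> B'.\<close>

definition bsq :: "('v, 'vm) mcat \<Rightarrow> ('w, 'wm) mcat \<Rightarrow> ('v \<times> 'w, 'vm \<times> 'wm, 'c, 'h) gcat
    \<Rightarrow> 'v \<Rightarrow> 'w \<Rightarrow> 'c \<Rightarrow> 'c \<Rightarrow> 'c \<Rightarrow> 'c \<Rightarrow> 'h \<Rightarrow> 'h \<Rightarrow> 'h \<Rightarrow> 'h \<Rightarrow> bool" where
  "bsq V W C X X' A A' B B' f g \<phi> \<phi>' \<longleftrightarrow>
    f \<in> gHom C (X, munit W) A A' \<and>
    g \<in> gHom C (X, munit W) B B' \<and>
    \<phi> \<in> gHom C (munit V, X') A B \<and>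
    \<phi>' \<in> gHom C (munit V, X') A' B' \<and>
    gre C (minv V (mru V X), minv W (mru W X')) A B'
      (gcmp C (X, munit W) (munit V, X') A B B' g \<phi>)
  = gre C (minv V (mlu V X), minv W (mlu W X')) A B'
      (gcmp C (munit V, X') (X, munit W) A A' B' \<phi>' f)"

definition gtrans :: "('v, 'vm) mcat \<Rightarrow> ('w, 'wm) mcat \<Rightarrow> ('v, 'vm, 'a, 'ha) gcat
    \<Rightarrow> ('v \<times> 'w, 'vm \<times> 'wm, 'c, 'h) gcat
    \<Rightarrow> ('v, 'a, 'c, 'ha, 'h) gfun \<Rightarrow> ('v, 'a, 'c, 'ha, 'h) gfun \<Rightarrow> 'w \<Rightarrow> ('a \<Rightarrow> 'h) \<Rightarrow> bool" where
  "gtrans V W A C F G X' \<phi> \<longleftrightarrow>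
    (\<forall>a\<in>gOb A. \<phi> a \<in> gHom C (munit V, X') (fob F a) (fob G a)) \<and>
    (\<forall>X\<in>mOb V. \<forall>a\<in>gOb A. \<forall>b\<in>gOb A. \<forall>f\<in>gHom A X a b.
       bsq V W C X X' (fob F a) (fob F b) (fob G a) (fob G b)
         (fmor F X a b f) (fmor G X a b f) (\<phi> a) (\<phi> b))"

text \<open>Part (1): the right W-graded category  V[A, C]_W  (a left (revM W)-graded category).\<close>

definition funR :: "('v, 'vm) mcat \<Rightarrow> ('w, 'wm) mcat \<Rightarrow> ('v, 'vm, 'a, 'ha) gcat
    \<Rightarrow> ('v \<times> 'w, 'vm \<times> 'wm, 'c, 'h) gcat
    \<Rightarrow> ('w, 'wm, ('v, 'a, 'c, 'ha, 'h) gfun, 'a \<Rightarrow> 'h) gcat" where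
  "funR V W A C = \<lparr>
     gOb = {F. graded_functor V A (underV V W C) F \<and> gfun_ext V A F},
     gHom = (\<lambda>X' F G. {\<phi>. (\<forall>a. a \<notin> gOb A \<longrightarrow> \<phi> a = undefined) \<and> gtrans V W A C F G X' \<phi>}),
     gre = (\<lambda>\<beta> F G \<phi> a. if a \<in> gOb A
              then gre (underW V W C) \<beta> (fob F a) (fob G a) (\<phi> a) else undefined),
     gcmp = (\<lambda>Y' X' F G H \<psi> \<phi> a. if a \<in> gOb A
              then gcmp (underW V W C) Y' X' (fob F a) (fob G a) (fob H a) (\<psi> a) (\<phi> a)
              else undefined),
     gid = (\<lambda>F a. if a \<in> gOb A then gid C (fob F a) else undefined) \<rparr>"

definition funL :: "('v, 'vm) mcat \<Rightarrow> ('w, 'wm) mcat \<Rightarrow> ('w, 'wm, 'b, 'hb) gcat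
    \<Rightarrow> ('v \<times> 'w, 'vm \<times> 'wm, 'c, 'h) gcat
    \<Rightarrow> ('v, 'vm, ('w, 'b, 'c, 'hb, 'h) gfun, 'b \<Rightarrow> 'h) gcat" where
  "funL V W B C = \<lparr>
     gOb = {F. graded_functor (revM W) B (underW V W C) F \<and> gfun_ext (revM W) B F},
     gHom = (\<lambda>X F G. {\<phi>. (\<forall>b. b \<notin> gOb B \<longrightarrow> \<phi> b = undefined) \<and>
              (\<forall>b\<in>gOb B. \<phi> b \<in> gHom C (X, munit W) (fob F b) (fob G b)) \<and>
              (\<forall>X'\<in>mOb W. \<forall>b\<in>gOb B. \<forall>b'\<in>gOb B. \<forall>g\<in>gHom B X' b b'.
                 bsq V W C X X' (fob F b) (fob G b) (fob F b') (fob G b')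
                   (\<phi> b) (\<phi> b') (fmor F X' b b' g) (fmor G X' b b' g))}),
     gre = (\<lambda>\<alpha> F G \<phi> b. if b \<in> gOb B
              then gre (underV V W C) \<alpha> (fob F b) (fob G b) (\<phi> b) else undefined),
     gcmp = (\<lambda>Y X F G H \<psi> \<phi> b. if b \<in> gOb B
              then gcmp (underV V W C) Y X (fob F b) (fob G b) (fob H b) (\<psi> b) (\<phi> b)
              else undefined),
     gid = (\<lambda>F b. if b \<in> gOb B then gid C (fob F b) else undefined) \<rparr>"

end

theory Submission
  imports Defs
begin

locale moncat = fixes M :: "('o,'m) mcat" assumes mc: "monoidal_cat M"
begin

lemma cat: "category M" using mc unfolding monoidal_cat_def by (elim conjE) blast

lemma arr_dom[simp]: "f \<in> mAr M \<Longrightarrow> mdom M f \<in> mOb M"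
  using cat unfolding category_def by blast
lemma arr_cod[simp]: "f \<in> mAr M \<Longrightarrow> mcod M f \<in> mOb M"
  using cat unfolding category_def by blast
lemma id_arr[simp]: "X \<in> mOb M \<Longrightarrow> mid M X \<in> mAr M"
  using cat unfolding category_def mhom_def by blast
lemma dom_id[simp]: "X \<in> mOb M \<Longrightarrow> mdom M (mid M X) = X"
  using cat unfolding category_def mhom_def by blast
lemma cod_id[simp]: "X \<in> mOb M \<Longrightarrow> mcod M (mid M X) = X"
  using cat unfolding category_def mhom_def by blast
lemma comp_arr[simp]: "f \<in> mAr M \<Longrightarrow> g \<in> mAr M \<Longrightarrow> mcod M f = mdom M g \<Longrightarrow> mcomp M g f \<in> mAr M"
  using cat unfolding category_def mhom_def by blast
lemma dom_comp[simp]: "f \<in> mAr M \<Longrightarrow> g \<in> mAr M \<Longrightarrow> mcod M f = mdom M g \<Longrightarrow> mdom M (mcomp M g f) = mdom M f"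
  using cat unfolding category_def mhom_def by blast
lemma cod_comp[simp]: "f \<in> mAr M \<Longrightarrow> g \<in> mAr M \<Longrightarrow> mcod M f = mdom M g \<Longrightarrow> mcod M (mcomp M g f) = mcod M g"
  using cat unfolding category_def mhom_def by blast
lemma assoc: "f \<in> mAr M \<Longrightarrow> g \<in> mAr M \<Longrightarrow> h \<in> mAr M \<Longrightarrow> mcod M f = mdom M g \<Longrightarrow> mcod M g = mdom M h \<Longrightarrow>
   mcomp M (mcomp M h g) f = mcomp M h (mcomp M g f)"
  using cat unfolding category_def by metis
lemma comp_id_r[simp]: "f \<in> mAr M \<Longrightarrow> mdom M f = X \<Longrightarrow> mcomp M f (mid M X) = f"
  using cat unfolding category_def by blast
lemma comp_id_l[simp]: "f \<in> mAr M \<Longrightarrow> mcod M f = X \<Longrightarrow> mcomp M (mid M X) f = f"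
  using cat unfolding category_def by blast

lemma unit_ob[simp]: "munit M \<in> mOb M" using mc unfolding monoidal_cat_def by (elim conjE) blast
lemma tO_ob[simp]: "X \<in> mOb M \<Longrightarrow> Y \<in> mOb M \<Longrightarrow> mtO M X Y \<in> mOb M" using mc unfolding monoidal_cat_def by (elim conjE) simp
lemma tM_arr[simp]: "f \<in> mAr M \<Longrightarrow> g \<in> mAr M \<Longrightarrow> mtM M f g \<in> mAr M" using mc unfolding monoidal_cat_def mhom_def by (elim conjE) blast
lemma dom_tM[simp]: "f \<in> mAr M \<Longrightarrow> g \<in> mAr M \<Longrightarrow> mdom M (mtM M f g) = mtO M (mdom M f) (mdom M g)" using mc unfolding monoidal_cat_def mhom_def by (elim conjE) blast
lemma cod_tM[simp]: "f \<in> mAr M \<Longrightarrow> g \<in> mAr M \<Longrightarrow> mcod M (mtM M f g) = mtO M (mcod M f) (mcod M g)" using mc unfolding monoidal_cat_def mhom_def by (elim conjE) blast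
lemma tM_id[simp]: "X \<in> mOb M \<Longrightarrow> Y \<in> mOb M \<Longrightarrow> mtM M (mid M X) (mid M Y) = mid M (mtO M X Y)" using mc unfolding monoidal_cat_def by (elim conjE) simp
lemma interchange: "f \<in> mAr M \<Longrightarrow> g \<in> mAr M \<Longrightarrow> f' \<in> mAr M \<Longrightarrow> g' \<in> mAr M \<Longrightarrow>
        mcod M f = mdom M g \<Longrightarrow> mcod M f' = mdom M g' \<Longrightarrow>
        mtM M (mcomp M g f) (mcomp M g' f') = mcomp M (mtM M g g') (mtM M f f')"
  using mc unfolding monoidal_cat_def by (elim conjE) blast

lemma a_arr[simp]: "X \<in> mOb M \<Longrightarrow> Y \<in> mOb M \<Longrightarrow> Z \<in> mOb M \<Longrightarrow> masc M X Y Z \<in> mAr M"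
  using mc unfolding monoidal_cat_def mhom_def by (elim conjE) blast
lemma dom_a[simp]: "X \<in> mOb M \<Longrightarrow> Y \<in> mOb M \<Longrightarrow> Z \<in> mOb M \<Longrightarrow> mdom M (masc M X Y Z) = mtO M (mtO M X Y) Z"
  using mc unfolding monoidal_cat_def mhom_def by (elim conjE) blast
lemma cod_a[simp]: "X \<in> mOb M \<Longrightarrow> Y \<in> mOb M \<Longrightarrow> Z \<in> mOb M \<Longrightarrow> mcod M (masc M X Y Z) = mtO M X (mtO M Y Z)"
  using mc unfolding monoidal_cat_def mhom_def by (elim conjE) blast
lemma iso_a[simp]: "X \<in> mOb M \<Longrightarrow> Y \<in> mOb M \<Longrightarrow> Z \<in> mOb M \<Longrightarrow> miso M (masc M X Y Z)"
  using mc unfolding monoidal_cat_def by (elim conjE) blast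
lemma l_arr[simp]: "X \<in> mOb M \<Longrightarrow> mlu M X \<in> mAr M"
  using mc unfolding monoidal_cat_def mhom_def by (elim conjE) blast
lemma dom_l[simp]: "X \<in> mOb M \<Longrightarrow> mdom M (mlu M X) = mtO M (munit M) X"
  using mc unfolding monoidal_cat_def mhom_def by (elim conjE) blast
lemma cod_l[simp]: "X \<in> mOb M \<Longrightarrow> mcod M (mlu M X) = X"
  using mc unfolding monoidal_cat_def mhom_def by (elim conjE) blast
lemma iso_l[simp]: "X \<in> mOb M \<Longrightarrow> miso M (mlu M X)"
  using mc unfolding monoidal_cat_def by (elim conjE) blast
lemma r_arr[simp]: "X \<in> mOb M \<Longrightarrow> mru M X \<in> mAr M"
  using mc unfolding monoidal_cat_def mhom_def by (elim conjE) blast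
lemma dom_r[simp]: "X \<in> mOb M \<Longrightarrow> mdom M (mru M X) = mtO M X (munit M)"
  using mc unfolding monoidal_cat_def mhom_def by (elim conjE) blast
lemma cod_r[simp]: "X \<in> mOb M \<Longrightarrow> mcod M (mru M X) = X"
  using mc unfolding monoidal_cat_def mhom_def by (elim conjE) blast
lemma iso_r[simp]: "X \<in> mOb M \<Longrightarrow> miso M (mru M X)"
  using mc unfolding monoidal_cat_def by (elim conjE) blast

lemma a_nat: "f \<in> mAr M \<Longrightarrow> g \<in> mAr M \<Longrightarrow> h \<in> mAr M \<Longrightarrow>
        mcomp M (masc M (mcod M f) (mcod M g) (mcod M h)) (mtM M (mtM M f g) h)
      = mcomp M (mtM M f (mtM M g h)) (masc M (mdom M f) (mdom M g) (mdom M h))"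
  using mc unfolding monoidal_cat_def by (elim conjE) blast
lemma l_nat: "f \<in> mAr M \<Longrightarrow> mcomp M (mlu M (mcod M f)) (mtM M (mid M (munit M)) f)
               = mcomp M f (mlu M (mdom M f))"
  using mc unfolding monoidal_cat_def by (elim conjE) blast
lemma r_nat: "f \<in> mAr M \<Longrightarrow> mcomp M (mru M (mcod M f)) (mtM M f (mid M (munit M)))
               = mcomp M f (mru M (mdom M f))"
  using mc unfolding monoidal_cat_def by (elim conjE) blast
lemma pentagon: assumes "W \<in> mOb M" "X \<in> mOb M" "Y \<in> mOb M" "Z \<in> mOb M" shows "
        mcomp M (mtM M (mid M W) (masc M X Y Z))
          (mcomp M (masc M W (mtO M X Y) Z) (mtM M (masc M W X Y) (mid M Z)))
      = mcomp M (masc M W X (mtO M Y Z)) (masc M (mtO M W X) Y Z)"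
proof -
  have "\<forall>W\<in>mOb M. \<forall>X\<in>mOb M. \<forall>Y\<in>mOb M. \<forall>Z\<in>mOb M.
        mcomp M (mtM M (mid M W) (masc M X Y Z))
          (mcomp M (masc M W (mtO M X Y) Z) (mtM M (masc M W X Y) (mid M Z)))
      = mcomp M (masc M W X (mtO M Y Z)) (masc M (mtO M W X) Y Z)"
    using mc unfolding monoidal_cat_def by (elim conjE) assumption
  then show ?thesis using assms by blast
qed
lemma triangle: assumes "X \<in> mOb M" "Y \<in> mOb M" shows "
        mcomp M (mtM M (mid M X) (mlu M Y)) (masc M X (munit M) Y)
      = mtM M (mru M X) (mid M Y)"
proof -
  have "\<forall>X\<in>mOb M. \<forall>Y\<in>mOb M.
        mcomp M (mtM M (mid M X) (mlu M Y)) (masc M X (munit M) Y)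
      = mtM M (mru M X) (mid M Y)"
    using mc unfolding monoidal_cat_def by (elim conjE) assumption
  then show ?thesis using assms by blast
qed

section \<open>Inverses\<close>

lemma inv_ex: assumes "miso M f"
  shows "minv M f \<in> mAr M \<and> mdom M (minv M f) = mcod M f \<and> mcod M (minv M f) = mdom M f \<and>
         mcomp M (minv M f) f = mid M (mdom M f) \<and> mcomp M f (minv M f) = mid M (mcod M f)"
proof -
  have "\<exists>g. g \<in> mhom M (mcod M f) (mdom M f) \<and>
        mcomp M g f = mid M (mdom M f) \<and> mcomp M f g = mid M (mcod M f)"
    using assms unfolding miso_def by blast
  from someI_ex[OF this] show ?thesis unfolding minv_def mhom_def by blast
qed

lemma iso_arr: "miso M f \<Longrightarrow> f \<in> mAr M" unfolding miso_def by blast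
lemma inv_arr[simp]: "miso M f \<Longrightarrow> minv M f \<in> mAr M" using inv_ex by blast
lemma dom_inv[simp]: "miso M f \<Longrightarrow> mdom M (minv M f) = mcod M f" using inv_ex by blast
lemma cod_inv[simp]: "miso M f \<Longrightarrow> mcod M (minv M f) = mdom M f" using inv_ex by blast
lemma inv_comp_l[simp]: "miso M f \<Longrightarrow> mcomp M (minv M f) f = mid M (mdom M f)" using inv_ex by blast
lemma inv_comp_r[simp]: "miso M f \<Longrightarrow> mcomp M f (minv M f) = mid M (mcod M f)" using inv_ex by blast

lemma inv_unique:
  assumes f: "miso M f" and g: "g \<in> mAr M" "mdom M g = mcod M f" "mcod M g = mdom M f"
    and e: "mcomp M g f = mid M (mdom M f)"
  shows "minv M f = g"
proof -
  have fa: "f \<in> mAr M" using f iso_arr by blast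
  have "g = mcomp M g (mcomp M f (minv M f))" using f g fa by simp
  also have "\<dots> = mcomp M (mcomp M g f) (minv M f)" using f g fa by (simp add: assoc)
  also have "\<dots> = minv M f" using e f fa by simp
  finally show ?thesis by simp
qed

lemma iso_intro:
  assumes "f \<in> mAr M" "g \<in> mAr M" "mdom M g = mcod M f" "mcod M g = mdom M f"
    "mcomp M g f = mid M (mdom M f)" "mcomp M f g = mid M (mcod M f)"
  shows "miso M f"
  using assms unfolding miso_def mhom_def by blast

lemma iso_inv[simp]: "miso M f \<Longrightarrow> miso M (minv M f)"
  by (rule iso_intro[where g=f]) (auto simp: iso_arr)

lemma inv_inv[simp]: "miso M f \<Longrightarrow> minv M (minv M f) = f"
  by (rule inv_unique) (auto simp: iso_arr)

lemma iso_id[simp]: "X \<in> mOb M \<Longrightarrow> miso M (mid M X)"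
  by (rule iso_intro[where g="mid M X"]) auto
lemma inv_id[simp]: "X \<in> mOb M \<Longrightarrow> minv M (mid M X) = mid M X"
  by (rule inv_unique) auto

lemma iso_comp[simp]: assumes "miso M f" "miso M g" "mcod M f = mdom M g"
  shows "miso M (mcomp M g f)"
proof -
  have fa: "f \<in> mAr M" "g \<in> mAr M" using assms iso_arr by auto
  show ?thesis
    apply (rule iso_intro[where g="mcomp M (minv M f) (minv M g)"])
    using assms fa
    by (auto simp: assoc[symmetric]) (simp_all add: assoc)
qed

lemma inv_comp: assumes "miso M f" "miso M g" "mcod M f = mdom M g"
  shows "minv M (mcomp M g f) = mcomp M (minv M f) (minv M g)"
proof -
  have fa: "f \<in> mAr M" "g \<in> mAr M" using assms iso_arr by auto
  show ?thesis
    apply (rule inv_unique)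
    using assms fa
    by (auto simp: assoc[symmetric]) (simp_all add: assoc)
qed

lemma iso_tM[simp]: assumes "miso M f" "miso M g" shows "miso M (mtM M f g)"
proof -
  have fa: "f \<in> mAr M" "g \<in> mAr M" using assms iso_arr by auto
  show ?thesis
    apply (rule iso_intro[where g="mtM M (minv M f) (minv M g)"])
    using assms fa by (auto simp: interchange[symmetric])
qed

lemma inv_tM: assumes "miso M f" "miso M g" shows "minv M (mtM M f g) = mtM M (minv M f) (minv M g)"
proof -
  have fa: "f \<in> mAr M" "g \<in> mAr M" using assms iso_arr by auto
  show ?thesis
    apply (rule inv_unique)
    using assms fa by (auto simp: interchange[symmetric])
qed

lemma cancel_r: assumes "miso M f" "g \<in> mAr M" "h \<in> mAr M" "mdom M g = mcod M f" "mdom M h = mcod M f"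
  and e: "mcomp M g f = mcomp M h f" shows "g = h"
proof -
  have fa: "f \<in> mAr M" using assms iso_arr by auto
  have "g = mcomp M (mcomp M g f) (minv M f)" using assms(1-5) fa by (simp add: assoc)
  also have "\<dots> = mcomp M (mcomp M h f) (minv M f)" using assms by simp
  also have "\<dots> = h" using assms(1-5) fa by (simp add: assoc)
  finally show ?thesis .
qed

lemma cancel_l: assumes "miso M f" "g \<in> mAr M" "h \<in> mAr M" "mcod M g = mdom M f" "mcod M h = mdom M f"
  and e: "mcomp M f g = mcomp M f h" shows "g = h"
proof -
  have fa: "f \<in> mAr M" using assms iso_arr by auto
  have "g = mcomp M (minv M f) (mcomp M f g)" using assms(1-5) fa by (simp add: assoc[symmetric])
  also have "\<dots> = mcomp M (minv M f) (mcomp M f h)" using assms by simp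
  also have "\<dots> = h" using assms(1-5) fa by (simp add: assoc[symmetric])
  finally show ?thesis .
qed


section \<open>Coherence\<close>

abbreviation cp (infixr "\<cdot>" 55) where "g \<cdot> f \<equiv> mcomp M g f"
abbreviation tn (infixr "\<star>" 60) where "f \<star> g \<equiv> mtM M f g"
abbreviation tO (infixr "\<odot>" 60) where "X \<odot> Y \<equiv> mtO M X Y"

lemma swap_inv:
  assumes u: "miso M u" and v: "miso M v" and x: "x \<in> mAr M" "mdom M x = mdom M u" "mcod M x = mdom M v"
    and y: "y \<in> mAr M" "mdom M y = mcod M u" "mcod M y = mcod M v"
    and e: "v \<cdot> x = y \<cdot> u"
  shows "x \<cdot> minv M u = minv M v \<cdot> y"
proof -
  have ua: "u \<in> mAr M" "v \<in> mAr M" using u v iso_arr by auto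
  have "minv M v \<cdot> y = minv M v \<cdot> (y \<cdot> (u \<cdot> minv M u))" using u v x y ua by simp
  also have "\<dots> = minv M v \<cdot> ((y \<cdot> u) \<cdot> minv M u)" using u v x y ua by (simp add: assoc)
  also have "\<dots> = minv M v \<cdot> ((v \<cdot> x) \<cdot> minv M u)" using e by simp
  also have "\<dots> = x \<cdot> minv M u" using u v x y ua by (simp add: assoc[symmetric])
  finally show ?thesis by simp
qed

lemma l_faithful: assumes "f \<in> mAr M" "g \<in> mAr M" "mdom M f = mdom M g" "mcod M f = mcod M g"
  "mid M (munit M) \<star> f = mid M (munit M) \<star> g" shows "f = g"
proof (rule cancel_r[of "mlu M (mdom M f)"])
  show "f \<cdot> mlu M (mdom M f) = g \<cdot> mlu M (mdom M f)"
    using l_nat[of f] l_nat[of g] assms by simp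
qed (use assms in auto)

lemma r_faithful: assumes "f \<in> mAr M" "g \<in> mAr M" "mdom M f = mdom M g" "mcod M f = mcod M g"
  "f \<star> mid M (munit M) = g \<star> mid M (munit M)" shows "f = g"
proof (rule cancel_r[of "mru M (mdom M f)"])
  show "f \<cdot> mru M (mdom M f) = g \<cdot> mru M (mdom M f)"
    using r_nat[of f] r_nat[of g] assms by simp
qed (use assms in auto)

lemma idtn: "X \<in> mOb M \<Longrightarrow> f \<in> mAr M \<Longrightarrow> g \<in> mAr M \<Longrightarrow> mcod M f = mdom M g \<Longrightarrow>
   mid M X \<star> (g \<cdot> f) = (mid M X \<star> g) \<cdot> (mid M X \<star> f)"
  using interchange[of "mid M X" "mid M X" f g] by simp
lemma tnid: "X \<in> mOb M \<Longrightarrow> f \<in> mAr M \<Longrightarrow> g \<in> mAr M \<Longrightarrow> mcod M f = mdom M g \<Longrightarrow>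
   (g \<cdot> f) \<star> mid M X = (g \<star> mid M X) \<cdot> (f \<star> mid M X)"
  using interchange[of f g "mid M X" "mid M X"] by simp

lemma K1: assumes X: "X \<in> mOb M" and Y: "Y \<in> mOb M"
  shows "mlu M (X \<odot> Y) \<cdot> masc M (munit M) X Y = mlu M X \<star> mid M Y"
proof (rule l_faithful)
  let ?U = "munit M"
  let ?k = "masc M ?U (?U \<odot> X) Y \<cdot> (masc M ?U ?U X \<star> mid M Y)"
  have k: "miso M ?k" using X Y by simp
  have "(mid M ?U \<star> (mlu M (X \<odot> Y) \<cdot> masc M ?U X Y)) \<cdot> ?k
      = (mid M ?U \<star> mlu M (X \<odot> Y)) \<cdot> ((mid M ?U \<star> masc M ?U X Y) \<cdot> ?k)"
    using X Y by (simp add: idtn assoc)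
  also have "\<dots> = (mid M ?U \<star> mlu M (X \<odot> Y)) \<cdot> (masc M ?U ?U (X \<odot> Y) \<cdot> masc M (?U \<odot> ?U) X Y)"
    using pentagon[of ?U ?U X Y] X Y by simp
  also have "\<dots> = (mru M ?U \<star> mid M (X \<odot> Y)) \<cdot> masc M (?U \<odot> ?U) X Y"
    using triangle[of ?U "X \<odot> Y"] X Y by (simp add: assoc[symmetric])
  also have "\<dots> = masc M ?U X Y \<cdot> ((mru M ?U \<star> mid M X) \<star> mid M Y)"
    using a_nat[of "mru M ?U" "mid M X" "mid M Y"] X Y by simp
  finally have L: "(mid M ?U \<star> (mlu M (X \<odot> Y) \<cdot> masc M ?U X Y)) \<cdot> ?k = masc M ?U X Y \<cdot> ((mru M ?U \<star> mid M X) \<star> mid M Y)" .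
  have "(mid M ?U \<star> (mlu M X \<star> mid M Y)) \<cdot> ?k
      = ((mid M ?U \<star> (mlu M X \<star> mid M Y)) \<cdot> masc M ?U (?U \<odot> X) Y) \<cdot> (masc M ?U ?U X \<star> mid M Y)"
    using X Y by (simp add: assoc)
  also have "\<dots> = (masc M ?U X Y \<cdot> ((mid M ?U \<star> mlu M X) \<star> mid M Y)) \<cdot> (masc M ?U ?U X \<star> mid M Y)"
    using a_nat[of "mid M ?U" "mlu M X" "mid M Y"] X Y by simp
  also have "\<dots> = masc M ?U X Y \<cdot> (((mid M ?U \<star> mlu M X) \<cdot> masc M ?U ?U X) \<star> mid M Y)"
    using X Y by (simp add: assoc tnid)
  also have "\<dots> = masc M ?U X Y \<cdot> ((mru M ?U \<star> mid M X) \<star> mid M Y)"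
    using triangle[of ?U X] X Y by simp
  finally have R: "(mid M ?U \<star> (mlu M X \<star> mid M Y)) \<cdot> ?k = masc M ?U X Y \<cdot> ((mru M ?U \<star> mid M X) \<star> mid M Y)" .
  show "mid M ?U \<star> (mlu M (X \<odot> Y) \<cdot> masc M ?U X Y) = mid M ?U \<star> (mlu M X \<star> mid M Y)"
    by (rule cancel_r[OF k]) (use X Y L R in simp_all)
qed (use X Y in simp_all)


lemma K2: assumes X: "X \<in> mOb M" and Y: "Y \<in> mOb M"
  shows "(mid M X \<star> mru M Y) \<cdot> masc M X Y (munit M) = mru M (X \<odot> Y)"
proof (rule r_faithful)
  let ?U = "munit M"
  have E1: "(mid M X \<star> (mid M Y \<star> mlu M ?U)) \<cdot> (masc M X Y (?U \<odot> ?U) \<cdot> masc M (X \<odot> Y) ?U ?U)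
      = masc M X Y ?U \<cdot> (mru M (X \<odot> Y) \<star> mid M ?U)"
  proof -
    have "(mid M X \<star> (mid M Y \<star> mlu M ?U)) \<cdot> (masc M X Y (?U \<odot> ?U) \<cdot> masc M (X \<odot> Y) ?U ?U)
       = ((mid M X \<star> (mid M Y \<star> mlu M ?U)) \<cdot> masc M X Y (?U \<odot> ?U)) \<cdot> masc M (X \<odot> Y) ?U ?U"
      using X Y by (simp add: assoc)
    also have "\<dots> = (masc M X Y ?U \<cdot> ((mid M X \<star> mid M Y) \<star> mlu M ?U)) \<cdot> masc M (X \<odot> Y) ?U ?U"
      using a_nat[of "mid M X" "mid M Y" "mlu M ?U"] X Y by simp
    also have "\<dots> = masc M X Y ?U \<cdot> ((mid M (X \<odot> Y) \<star> mlu M ?U) \<cdot> masc M (X \<odot> Y) ?U ?U)"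
      using X Y by (simp add: assoc)
    also have "\<dots> = masc M X Y ?U \<cdot> (mru M (X \<odot> Y) \<star> mid M ?U)"
      using triangle[of "X \<odot> Y" ?U] X Y by simp
    finally show ?thesis .
  qed
  have E2: "(mid M X \<star> (mid M Y \<star> mlu M ?U)) \<cdot> (masc M X Y (?U \<odot> ?U) \<cdot> masc M (X \<odot> Y) ?U ?U)
      = masc M X Y ?U \<cdot> (((mid M X \<star> mru M Y) \<cdot> masc M X Y ?U) \<star> mid M ?U)"
  proof -
    have "(mid M X \<star> (mid M Y \<star> mlu M ?U)) \<cdot> (masc M X Y (?U \<odot> ?U) \<cdot> masc M (X \<odot> Y) ?U ?U)
       = (mid M X \<star> (mid M Y \<star> mlu M ?U)) \<cdot> ((mid M X \<star> masc M Y ?U ?U) \<cdot>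
           (masc M X (Y \<odot> ?U) ?U \<cdot> (masc M X Y ?U \<star> mid M ?U)))"
      using pentagon[of X Y ?U ?U] X Y by simp
    also have "\<dots> = ((mid M X \<star> ((mid M Y \<star> mlu M ?U) \<cdot> masc M Y ?U ?U)) \<cdot>
           masc M X (Y \<odot> ?U) ?U) \<cdot> (masc M X Y ?U \<star> mid M ?U)"
      using X Y by (simp add: assoc idtn)
    also have "\<dots> = ((mid M X \<star> (mru M Y \<star> mid M ?U)) \<cdot>
           masc M X (Y \<odot> ?U) ?U) \<cdot> (masc M X Y ?U \<star> mid M ?U)"
      using triangle[of Y ?U] X Y by simp
    also have "\<dots> = (masc M X Y ?U \<cdot> ((mid M X \<star> mru M Y) \<star> mid M ?U)) \<cdot> (masc M X Y ?U \<star> mid M ?U)"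
      using a_nat[of "mid M X" "mru M Y" "mid M ?U"] X Y by simp
    also have "\<dots> = masc M X Y ?U \<cdot> (((mid M X \<star> mru M Y) \<cdot> masc M X Y ?U) \<star> mid M ?U)"
      using X Y by (simp add: assoc tnid)
    finally show ?thesis .
  qed
  show "((mid M X \<star> mru M Y) \<cdot> masc M X Y ?U) \<star> mid M ?U = mru M (X \<odot> Y) \<star> mid M ?U"
    by (rule cancel_l[of "masc M X Y ?U"]) (use X Y E1 E2 in simp_all)
qed (use X Y in simp_all)

lemma l_UU: "mlu M (munit M \<odot> munit M) = mid M (munit M) \<star> mlu M (munit M)"
proof (rule cancel_l[of "mlu M (munit M)"])
  show "mlu M (munit M) \<cdot> mlu M (munit M \<odot> munit M) = mlu M (munit M) \<cdot> (mid M (munit M) \<star> mlu M (munit M))"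
    using l_nat[of "mlu M (munit M)"] by simp
qed simp_all

lemma K3: "mlu M (munit M) = mru M (munit M)"
proof (rule r_faithful)
  show "mlu M (munit M) \<star> mid M (munit M) = mru M (munit M) \<star> mid M (munit M)"
    using K1[of "munit M" "munit M"] triangle[of "munit M" "munit M"] l_UU by simp
qed simp_all


lemma l_inv_nat: "f \<in> mAr M \<Longrightarrow> (mid M (munit M) \<star> f) \<cdot> minv M (mlu M (mdom M f)) = minv M (mlu M (mcod M f)) \<cdot> f"
  by (rule swap_inv) (simp_all add: l_nat)
lemma r_inv_nat: "f \<in> mAr M \<Longrightarrow> (f \<star> mid M (munit M)) \<cdot> minv M (mru M (mdom M f)) = minv M (mru M (mcod M f)) \<cdot> f"
  by (rule swap_inv) (simp_all add: r_nat)

lemma K1i: assumes X: "X \<in> mOb M" and Y: "Y \<in> mOb M"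
  shows "minv M (masc M (munit M) X Y) \<cdot> minv M (mlu M (X \<odot> Y)) = minv M (mlu M X) \<star> mid M Y"
  using arg_cong[OF K1[OF X Y], of "minv M"] X Y by (simp add: inv_comp inv_tM)

lemma K1i': assumes X: "X \<in> mOb M" and Y: "Y \<in> mOb M"
  shows "masc M (munit M) X Y \<cdot> (minv M (mlu M X) \<star> mid M Y) = minv M (mlu M (X \<odot> Y))"
proof -
  have "masc M (munit M) X Y \<cdot> (minv M (mlu M X) \<star> mid M Y)
     = masc M (munit M) X Y \<cdot> (minv M (masc M (munit M) X Y) \<cdot> minv M (mlu M (X \<odot> Y)))"
    using K1i[OF X Y] by simp
  also have "\<dots> = minv M (mlu M (X \<odot> Y))" using X Y by (simp add: assoc[symmetric])
  finally show ?thesis .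
qed

lemma K2i': assumes X: "X \<in> mOb M" and Y: "Y \<in> mOb M"
  shows "masc M X Y (munit M) \<cdot> minv M (mru M (X \<odot> Y)) = mid M X \<star> minv M (mru M Y)"
proof -
  have e: "minv M (masc M X Y (munit M)) \<cdot> (mid M X \<star> minv M (mru M Y)) = minv M (mru M (X \<odot> Y))"
    using arg_cong[OF K2[OF X Y], of "minv M"] X Y by (simp add: inv_comp inv_tM)
  have "masc M X Y (munit M) \<cdot> minv M (mru M (X \<odot> Y))
     = masc M X Y (munit M) \<cdot> (minv M (masc M X Y (munit M)) \<cdot> (mid M X \<star> minv M (mru M Y)))"
    using e by simp
  also have "\<dots> = mid M X \<star> minv M (mru M Y)" using X Y by (simp add: assoc[symmetric])
  finally show ?thesis .
qed

lemma Ti: assumes X: "X \<in> mOb M" and Y: "Y \<in> mOb M"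
  shows "minv M (masc M X (munit M) Y) \<cdot> (mid M X \<star> minv M (mlu M Y)) = minv M (mru M X) \<star> mid M Y"
  using arg_cong[OF triangle[OF X Y], of "minv M"] X Y by (simp add: inv_comp inv_tM)


lemma tn_comp_id: "X \<in> mOb M \<Longrightarrow> f \<in> mAr M \<Longrightarrow> g \<in> mAr M \<Longrightarrow> mcod M f = mdom M g \<Longrightarrow>
   (mid M X \<star> g) \<cdot> (mid M X \<star> f) = mid M X \<star> (g \<cdot> f)"
  by (simp add: idtn)
lemma comp_tn_id: "X \<in> mOb M \<Longrightarrow> f \<in> mAr M \<Longrightarrow> g \<in> mAr M \<Longrightarrow> mcod M f = mdom M g \<Longrightarrow>
   (g \<star> mid M X) \<cdot> (f \<star> mid M X) = (g \<cdot> f) \<star> mid M X"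
  by (simp add: tnid)

lemma lr_inv: "X \<in> mOb M \<Longrightarrow> (minv M (mlu M X) \<cdot> mru M X) \<cdot> minv M (mru M X) = minv M (mlu M X)"
  by (simp add: assoc)

lemma coh1: assumes X: "X \<in> mOb M" and Y: "Y \<in> mOb M"
  shows "masc M (munit M) X Y \<cdot> (((minv M (mlu M X) \<cdot> mru M X) \<star> mid M Y) \<cdot> (minv M (masc M X (munit M) Y) \<cdot>
     ((mid M X \<star> (minv M (mlu M Y) \<cdot> mru M Y)) \<cdot> (masc M X Y (munit M) \<cdot> minv M (mru M (X \<odot> Y))))))
   = minv M (mlu M (X \<odot> Y))"
proof -
  have 1: "masc M X Y (munit M) \<cdot> minv M (mru M (X \<odot> Y)) = mid M X \<star> minv M (mru M Y)" by (rule K2i'[OF X Y])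
  have 2: "(mid M X \<star> (minv M (mlu M Y) \<cdot> mru M Y)) \<cdot> (mid M X \<star> minv M (mru M Y)) = mid M X \<star> minv M (mlu M Y)"
    using X Y by (simp add: tn_comp_id lr_inv)
  have 3: "minv M (masc M X (munit M) Y) \<cdot> (mid M X \<star> minv M (mlu M Y)) = minv M (mru M X) \<star> mid M Y" by (rule Ti[OF X Y])
  have 4: "((minv M (mlu M X) \<cdot> mru M X) \<star> mid M Y) \<cdot> (minv M (mru M X) \<star> mid M Y) = minv M (mlu M X) \<star> mid M Y"
    using X Y by (simp add: comp_tn_id lr_inv)
  have 5: "masc M (munit M) X Y \<cdot> (minv M (mlu M X) \<star> mid M Y) = minv M (mlu M (X \<odot> Y))" by (rule K1i'[OF X Y])
  show ?thesis by (simp only: 1 2 3 4 5)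
qed

lemma coh2: assumes X: "X \<in> mOb M"
  shows "minv M (masc M (munit M) (munit M) X) \<cdot> ((mid M (munit M) \<star> (minv M (mlu M X) \<cdot> mru M X)) \<cdot>
     (masc M (munit M) X (munit M) \<cdot> (((minv M (mlu M X) \<cdot> mru M X) \<star> mid M (munit M)) \<cdot>
     (minv M (masc M X (munit M) (munit M)) \<cdot> ((mid M X \<star> minv M (mlu M (munit M))) \<cdot> minv M (mru M X))))))
   = (minv M (mlu M (munit M)) \<star> mid M X) \<cdot> minv M (mlu M X)"
proof -
  let ?U = "munit M"
  have 1: "minv M (masc M X ?U ?U) \<cdot> ((mid M X \<star> minv M (mlu M ?U)) \<cdot> minv M (mru M X))
      = (minv M (mru M X) \<star> mid M ?U) \<cdot> minv M (mru M X)"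
    using X Ti[OF X, of ?U] by (simp add: assoc[symmetric])
  have 2: "((minv M (mlu M X) \<cdot> mru M X) \<star> mid M ?U) \<cdot> ((minv M (mru M X) \<star> mid M ?U) \<cdot> minv M (mru M X))
     = minv M (mru M (?U \<odot> X)) \<cdot> minv M (mlu M X)"
  proof -
    have "((minv M (mlu M X) \<cdot> mru M X) \<star> mid M ?U) \<cdot> ((minv M (mru M X) \<star> mid M ?U) \<cdot> minv M (mru M X))
       = (((minv M (mlu M X) \<cdot> mru M X) \<star> mid M ?U) \<cdot> (minv M (mru M X) \<star> mid M ?U)) \<cdot> minv M (mru M X)"
      using X by (simp add: assoc)
    also have "\<dots> = (minv M (mlu M X) \<star> mid M ?U) \<cdot> minv M (mru M X)"
      using X by (simp add: comp_tn_id lr_inv)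
    also have "\<dots> = minv M (mru M (?U \<odot> X)) \<cdot> minv M (mlu M X)"
      using r_inv_nat[of "minv M (mlu M X)"] X by simp
    finally show ?thesis .
  qed
  have 3: "masc M ?U X ?U \<cdot> (minv M (mru M (?U \<odot> X)) \<cdot> minv M (mlu M X)) = (mid M ?U \<star> minv M (mru M X)) \<cdot> minv M (mlu M X)"
    using X K2i'[OF _ X, of ?U] by (simp add: assoc[symmetric])
  have 4: "(mid M ?U \<star> (minv M (mlu M X) \<cdot> mru M X)) \<cdot> ((mid M ?U \<star> minv M (mru M X)) \<cdot> minv M (mlu M X))
     = minv M (mlu M (?U \<odot> X)) \<cdot> minv M (mlu M X)"
  proof -
    have "(mid M ?U \<star> (minv M (mlu M X) \<cdot> mru M X)) \<cdot> ((mid M ?U \<star> minv M (mru M X)) \<cdot> minv M (mlu M X))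
       = ((mid M ?U \<star> (minv M (mlu M X) \<cdot> mru M X)) \<cdot> (mid M ?U \<star> minv M (mru M X))) \<cdot> minv M (mlu M X)"
      using X by (simp add: assoc)
    also have "\<dots> = (mid M ?U \<star> minv M (mlu M X)) \<cdot> minv M (mlu M X)"
      using X by (simp add: tn_comp_id lr_inv)
    also have "\<dots> = minv M (mlu M (?U \<odot> X)) \<cdot> minv M (mlu M X)"
      using l_inv_nat[of "minv M (mlu M X)"] X by simp
    finally show ?thesis .
  qed
  have 5: "minv M (masc M ?U ?U X) \<cdot> (minv M (mlu M (?U \<odot> X)) \<cdot> minv M (mlu M X)) = (minv M (mlu M ?U) \<star> mid M X) \<cdot> minv M (mlu M X)"
    using X K1i[OF _ X, of ?U] by (simp add: assoc[symmetric])
  show ?thesis by (simp only: 1 2 3 4 5)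
qed

end

lemma prodM_simps[simp]:
  "mOb (prodM M N) = mOb M \<times> mOb N"
  "mAr (prodM M N) = mAr M \<times> mAr N"
  "mdom (prodM M N) (f,f') = (mdom M f, mdom N f')"
  "mcod (prodM M N) (f,f') = (mcod M f, mcod N f')"
  "mcomp (prodM M N) (g,g') (f,f') = (mcomp M g f, mcomp N g' f')"
  "mid (prodM M N) (X,X') = (mid M X, mid N X')"
  "mtO (prodM M N) (X,X') (Y,Y') = (mtO M X Y, mtO N X' Y')"
  "mtM (prodM M N) (f,f') (g,g') = (mtM M f g, mtM N f' g')"
  "munit (prodM M N) = (munit M, munit N)"
  "masc (prodM M N) (X,X') (Y,Y') (Z,Z') = (masc M X Y Z, masc N X' Y' Z')"
  "mlu (prodM M N) (X,X') = (mlu M X, mlu N X')"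
  "mru (prodM M N) (X,X') = (mru M X, mru N X')"
  by (simp_all add: prodM_def)

lemma revM_simps[simp]:
  "mOb (revM M) = mOb M" "mAr (revM M) = mAr M" "mdom (revM M) = mdom M" "mcod (revM M) = mcod M"
  "mcomp (revM M) = mcomp M" "mid (revM M) = mid M"
  "mtO (revM M) X Y = mtO M Y X" "mtM (revM M) f g = mtM M g f" "munit (revM M) = munit M"
  "masc (revM M) X Y Z = minv M (masc M Z Y X)" "mlu (revM M) = mru M" "mru (revM M) = mlu M"
  by (simp_all add: revM_def)

locale bigr = V: moncat V + W: moncat W for V :: "('v,'vm) mcat" and W :: "('w,'wm) mcat" +
  fixes C :: "('v \<times> 'w, 'vm \<times> 'wm, 'c, 'h) gcat"
  assumes gc: "graded_cat (prodM V (revM W)) C"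
begin

lemmas gcs = gc[unfolded graded_cat_def]

lemma Cre_in[simp]:
  assumes "\<alpha> \<in> mAr V" "\<alpha>' \<in> mAr W" "A \<in> gOb C" "B \<in> gOb C" "f \<in> gHom C (mcod V \<alpha>, mcod W \<alpha>') A B"
  shows "gre C (\<alpha>,\<alpha>') A B f \<in> gHom C (mdom V \<alpha>, mdom W \<alpha>') A B"
  using gcs[THEN conjunct1, rule_format, of "(\<alpha>,\<alpha>')" A B f] assms by simp

lemma Cre_id:
  assumes "X \<in> mOb V" "X' \<in> mOb W" "A \<in> gOb C" "B \<in> gOb C" "f \<in> gHom C (X,X') A B"
  shows "gre C (mid V X, mid W X') A B f = f"
  using gcs[THEN conjunct2, THEN conjunct1, rule_format, of "(X,X')" A B f] assms by simp

lemma Cre_comp: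
  assumes "\<alpha> \<in> mAr V" "\<alpha>' \<in> mAr W" "\<beta> \<in> mAr V" "\<beta>' \<in> mAr W" "mcod V \<beta> = mdom V \<alpha>" "mcod W \<beta>' = mdom W \<alpha>'"
    "A \<in> gOb C" "B \<in> gOb C" "f \<in> gHom C (mcod V \<alpha>, mcod W \<alpha>') A B"
  shows "gre C (\<beta>,\<beta>') A B (gre C (\<alpha>,\<alpha>') A B f) = gre C (mcomp V \<alpha> \<beta>, mcomp W \<alpha>' \<beta>') A B f"
  using gcs[THEN conjunct2, THEN conjunct2, THEN conjunct1, rule_format, of "(\<alpha>,\<alpha>')" "(\<beta>,\<beta>')" A B f] assms by simp

lemma Ccmp_in[simp]:
  assumes "X \<in> mOb V" "X' \<in> mOb W" "Y \<in> mOb V" "Y' \<in> mOb W" "A \<in> gOb C" "B \<in> gOb C" "D \<in> gOb C"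
    "f \<in> gHom C (X,X') A B" "g \<in> gHom C (Y,Y') B D"
  shows "gcmp C (Y,Y') (X,X') A B D g f \<in> gHom C (mtO V Y X, mtO W X' Y') A D"
  using gcs[THEN conjunct2, THEN conjunct2, THEN conjunct2, THEN conjunct1, rule_format, of "(X,X')" "(Y,Y')" A B D f g] assms by simp

lemma Cid_in[simp]: "A \<in> gOb C \<Longrightarrow> gid C A \<in> gHom C (munit V, munit W) A A"
  using gcs[THEN conjunct2, THEN conjunct2, THEN conjunct2, THEN conjunct2, THEN conjunct1, rule_format, of A] by simp

lemma Ccmp_re:
  assumes "\<alpha> \<in> mAr V" "\<alpha>' \<in> mAr W" "\<beta> \<in> mAr V" "\<beta>' \<in> mAr W"
    "A \<in> gOb C" "B \<in> gOb C" "D \<in> gOb C"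
    "f \<in> gHom C (mcod V \<alpha>, mcod W \<alpha>') A B" "g \<in> gHom C (mcod V \<beta>, mcod W \<beta>') B D"
  shows "gcmp C (mdom V \<beta>, mdom W \<beta>') (mdom V \<alpha>, mdom W \<alpha>') A B D (gre C (\<beta>,\<beta>') B D g) (gre C (\<alpha>,\<alpha>') A B f)
       = gre C (mtM V \<beta> \<alpha>, mtM W \<alpha>' \<beta>') A D (gcmp C (mcod V \<beta>, mcod W \<beta>') (mcod V \<alpha>, mcod W \<alpha>') A B D g f)"
  using gcs[THEN conjunct2, THEN conjunct2, THEN conjunct2, THEN conjunct2, THEN conjunct2, THEN conjunct1,
     rule_format, of "(\<alpha>,\<alpha>')" "(\<beta>,\<beta>')" A B D f g] assms by simp

lemma Cassoc:
  assumes "X \<in> mOb V" "X' \<in> mOb W" "Y \<in> mOb V" "Y' \<in> mOb W" "Z \<in> mOb V" "Z' \<in> mOb W"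
    "A \<in> gOb C" "B \<in> gOb C" "D \<in> gOb C" "E \<in> gOb C"
    "f \<in> gHom C (X,X') A B" "g \<in> gHom C (Y,Y') B D" "h \<in> gHom C (Z,Z') D E"
  shows "gcmp C (mtO V Z Y, mtO W Y' Z') (X,X') A B E (gcmp C (Z,Z') (Y,Y') B D E h g) f
      = gre C (masc V Z Y X, minv W (masc W X' Y' Z')) A E
          (gcmp C (Z,Z') (mtO V Y X, mtO W X' Y') A D E h (gcmp C (Y,Y') (X,X') A B D g f))"
  using gcs[THEN conjunct2, THEN conjunct2, THEN conjunct2, THEN conjunct2, THEN conjunct2, THEN conjunct2, THEN conjunct1,
     rule_format, of "(X,X')" "(Y,Y')" "(Z,Z')" A B D E f g h] assms by simp

lemma Cunit_r:
  assumes "X \<in> mOb V" "X' \<in> mOb W" "A \<in> gOb C" "B \<in> gOb C" "f \<in> gHom C (X,X') A B"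
  shows "gcmp C (X,X') (munit V, munit W) A A B f (gid C A) = gre C (mru V X, mlu W X') A B f"
  using gcs[THEN conjunct2, THEN conjunct2, THEN conjunct2, THEN conjunct2, THEN conjunct2, THEN conjunct2, THEN conjunct2,
     rule_format, of "(X,X')" A B f] assms by simp

lemma Cunit_l:
  assumes "X \<in> mOb V" "X' \<in> mOb W" "A \<in> gOb C" "B \<in> gOb C" "f \<in> gHom C (X,X') A B"
  shows "gcmp C (munit V, munit W) (X,X') A B B (gid C B) f = gre C (mlu V X, mru W X') A B f"
  using gcs[THEN conjunct2, THEN conjunct2, THEN conjunct2, THEN conjunct2, THEN conjunct2, THEN conjunct2, THEN conjunct2,
     rule_format, of "(X,X')" A B f] assms by simp


lemma Cre_in'[simp]:
  assumes "\<alpha> \<in> mAr V" "\<alpha>' \<in> mAr W" "A \<in> gOb C" "B \<in> gOb C" "f \<in> gHom C (mcod V \<alpha>, mcod W \<alpha>') A B"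
    "mdom V \<alpha> = Y" "mdom W \<alpha>' = Y'"
  shows "gre C (\<alpha>,\<alpha>') A B f \<in> gHom C (Y, Y') A B"
  using Cre_in assms by blast

lemma Ccmp_in'[simp]:
  assumes "X \<in> mOb V" "X' \<in> mOb W" "Y \<in> mOb V" "Y' \<in> mOb W" "A \<in> gOb C" "B \<in> gOb C" "D \<in> gOb C"
    "f \<in> gHom C (X,X') A B" "g \<in> gHom C (Y,Y') B D" "Z = mtO V Y X" "Z' = mtO W X' Y'"
  shows "gcmp C (Y,Y') (X,X') A B D g f \<in> gHom C (Z, Z') A D"
  using Ccmp_in assms by blast

lemma Cid_in'[simp]: "A \<in> gOb C \<Longrightarrow> Z = munit V \<Longrightarrow> Z' = munit W \<Longrightarrow> gid C A \<in> gHom C (Z, Z') A A"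
  using Cid_in by blast

lemma Cre_comp'[simp]:
  assumes "\<alpha> \<in> mAr V" "\<alpha>' \<in> mAr W" "\<beta> \<in> mAr V" "\<beta>' \<in> mAr W" "mcod V \<beta> = mdom V \<alpha>" "mcod W \<beta>' = mdom W \<alpha>'"
    "A \<in> gOb C" "B \<in> gOb C" "f \<in> gHom C (mcod V \<alpha>, mcod W \<alpha>') A B"
  shows "gre C (\<beta>,\<beta>') A B (gre C (\<alpha>,\<alpha>') A B f) = gre C (mcomp V \<alpha> \<beta>, mcomp W \<alpha>' \<beta>') A B f"
  using Cre_comp assms by blast

lemma Cre_id':
  assumes "X \<in> mOb V" "X' \<in> mOb W" "A \<in> gOb C" "B \<in> gOb C" "f \<in> gHom C (X,X') A B"
  shows "gre C (mid V X, mid W X') A B f = f"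
  using Cre_id assms by blast

lemma Ccmp_re1:
  assumes "\<beta> \<in> mAr V" "\<beta>' \<in> mAr W" "X \<in> mOb V" "X' \<in> mOb W" "mdom V \<beta> = Y0" "mdom W \<beta>' = Y0'"
    "A \<in> gOb C" "B \<in> gOb C" "D \<in> gOb C"
    "f \<in> gHom C (X, X') A B" "g \<in> gHom C (mcod V \<beta>, mcod W \<beta>') B D"
  shows "gcmp C (Y0, Y0') (X, X') A B D (gre C (\<beta>,\<beta>') B D g) f
       = gre C (mtM V \<beta> (mid V X), mtM W (mid W X') \<beta>') A D (gcmp C (mcod V \<beta>, mcod W \<beta>') (X, X') A B D g f)"
  using Ccmp_re[of "mid V X" "mid W X'" \<beta> \<beta>' A B D f g] assms by (simp add: Cre_id')

lemma Ccmp_re2: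
  assumes "\<alpha> \<in> mAr V" "\<alpha>' \<in> mAr W" "Y \<in> mOb V" "Y' \<in> mOb W" "mdom V \<alpha> = X0" "mdom W \<alpha>' = X0'"
    "A \<in> gOb C" "B \<in> gOb C" "D \<in> gOb C"
    "f \<in> gHom C (mcod V \<alpha>, mcod W \<alpha>') A B" "g \<in> gHom C (Y, Y') B D"
  shows "gcmp C (Y, Y') (X0, X0') A B D g (gre C (\<alpha>,\<alpha>') A B f)
       = gre C (mtM V (mid V Y) \<alpha>, mtM W \<alpha>' (mid W Y')) A D (gcmp C (Y, Y') (mcod V \<alpha>, mcod W \<alpha>') A B D g f)"
  using Ccmp_re[of \<alpha> \<alpha>' "mid V Y" "mid W Y'" A B D f g] assms by (simp add: Cre_id')

lemma Cre_solve:
  assumes "miso V \<gamma>" "miso W \<gamma>'" "A \<in> gOb C" "B \<in> gOb C" "u \<in> gHom C (mcod V \<gamma>, mcod W \<gamma>') A B"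
    "\<delta> \<in> mAr V" "\<delta>' \<in> mAr W" "mdom V \<delta> = mdom V \<gamma>" "mdom W \<delta>' = mdom W \<gamma>'"
    "v \<in> gHom C (mcod V \<delta>, mcod W \<delta>') A B"
    "gre C (\<gamma>,\<gamma>') A B u = gre C (\<delta>,\<delta>') A B v"
  shows "u = gre C (mcomp V \<delta> (minv V \<gamma>), mcomp W \<delta>' (minv W \<gamma>')) A B v"
proof -
  have ga: "\<gamma> \<in> mAr V" "\<gamma>' \<in> mAr W" using assms V.iso_arr W.iso_arr by auto
  have "u = gre C (mid V (mcod V \<gamma>), mid W (mcod W \<gamma>')) A B u" using assms ga by (simp add: Cre_id')
  also have "\<dots> = gre C (mcomp V \<gamma> (minv V \<gamma>), mcomp W \<gamma>' (minv W \<gamma>')) A B u" using assms by simp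
  also have "\<dots> = gre C (minv V \<gamma>, minv W \<gamma>') A B (gre C (\<gamma>,\<gamma>') A B u)"
    using assms ga by (subst Cre_comp') simp_all
  also have "\<dots> = gre C (minv V \<gamma>, minv W \<gamma>') A B (gre C (\<delta>,\<delta>') A B v)" using assms by simp
  also have "\<dots> = gre C (mcomp V \<delta> (minv V \<gamma>), mcomp W \<delta>' (minv W \<gamma>')) A B v"
    using assms ga by (subst Cre_comp') simp_all
  finally show ?thesis .
qed

end

context bigr begin

lemma Cre_move:
  assumes "miso V \<gamma>" "miso W \<gamma>'" "A \<in> gOb C" "B \<in> gOb C" "u \<in> gHom C (mcod V \<gamma>, mcod W \<gamma>') A B"
    "gre C (\<gamma>,\<gamma>') A B u = v"
  shows "u = gre C (minv V \<gamma>, minv W \<gamma>') A B v"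
proof -
  have ga: "\<gamma> \<in> mAr V" "\<gamma>' \<in> mAr W" using assms V.iso_arr W.iso_arr by auto
  have "u = gre C (minv V \<gamma>, minv W \<gamma>') A B (gre C (\<gamma>,\<gamma>') A B u)"
    using assms ga by (subst Cre_comp') (simp_all add: Cre_id')
  then show ?thesis using assms by simp
qed

lemma sq_solve:
  assumes X: "X \<in> mOb V" and X': "X' \<in> mOb W" and ob: "A \<in> gOb C" "B \<in> gOb C"
    and u: "u \<in> gHom C (mtO V X (munit V), mtO W X' (munit W)) A B"
    and v: "v \<in> gHom C (mtO V (munit V) X, mtO W (munit W) X') A B"
    and e: "gre C (minv V (mru V X), minv W (mru W X')) A B u = gre C (minv V (mlu V X), minv W (mlu W X')) A B v"
  shows "u = gre C (mcomp V (minv V (mlu V X)) (mru V X), mcomp W (minv W (mlu W X')) (mru W X')) A B v"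
  using Cre_solve[of "minv V (mru V X)" "minv W (mru W X')" A B u "minv V (mlu V X)" "minv W (mlu W X')" v] assms
  by simp

lemma vpaste:
  fixes I J
  defines "I \<equiv> munit V" and "J \<equiv> munit W"
  assumes X: "X \<in> mOb V" and X': "X' \<in> mOb W" and Y': "Y' \<in> mOb W"
    and ob: "a1 \<in> gOb C" "b1 \<in> gOb C" "a2 \<in> gOb C" "b2 \<in> gOb C" "a3 \<in> gOb C" "b3 \<in> gOb C"
    and Ff: "Ff \<in> gHom C (X,J) a1 b1" and Gf: "Gf \<in> gHom C (X,J) a2 b2" and Hf: "Hf \<in> gHom C (X,J) a3 b3"
    and pa: "pa \<in> gHom C (I,X') a1 a2" and pb: "pb \<in> gHom C (I,X') b1 b2"
    and qa: "qa \<in> gHom C (I,Y') a2 a3" and qb: "qb \<in> gHom C (I,Y') b2 b3"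
    and sp: "gre C (minv V (mru V X), minv W (mru W X')) a1 b2 (gcmp C (X,J) (I,X') a1 a2 b2 Gf pa)
           = gre C (minv V (mlu V X), minv W (mlu W X')) a1 b2 (gcmp C (I,X') (X,J) a1 b1 b2 pb Ff)"
    and sq: "gre C (minv V (mru V X), minv W (mru W Y')) a2 b3 (gcmp C (X,J) (I,Y') a2 a3 b3 Hf qa)
           = gre C (minv V (mlu V X), minv W (mlu W Y')) a2 b3 (gcmp C (I,Y') (X,J) a2 b2 b3 qb Gf)"
  shows "gre C (minv V (mru V X), minv W (mru W (mtO W X' Y'))) a1 b3
           (gcmp C (X,J) (I, mtO W X' Y') a1 a3 b3 Hf
              (gre C (minv V (mlu V I), mid W (mtO W X' Y')) a1 a3 (gcmp C (I,Y') (I,X') a1 a2 a3 qa pa)))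
       = gre C (minv V (mlu V X), minv W (mlu W (mtO W X' Y'))) a1 b3
           (gcmp C (I, mtO W X' Y') (X,J) a1 b1 b3
              (gre C (minv V (mlu V I), mid W (mtO W X' Y')) b1 b3 (gcmp C (I,Y') (I,X') b1 b2 b3 qb pb)) Ff)"
proof -
  have I: "I \<in> mOb V" and J: "J \<in> mOb W" unfolding I_def J_def by simp_all
  note facts = X X' Y' ob Ff Gf Hf pa pb qa qb I J
  let ?Sp = "gcmp C (I,X') (X,J) a1 b1 b2 pb Ff"
  let ?Sq = "gcmp C (I,Y') (X,J) a2 b2 b3 qb Gf"
  let ?T6 = "gcmp C (mtO V I I, mtO W X' Y') (X,J) a1 b1 b3 (gcmp C (I,Y') (I,X') b1 b2 b3 qb pb) Ff"
  let ?T5 = "gcmp C (I,Y') (mtO V I X, mtO W J X') a1 b2 b3 qb ?Sp"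
  let ?T4 = "gcmp C (I,Y') (mtO V X I, mtO W X' J) a1 b2 b3 qb (gcmp C (X,J) (I,X') a1 a2 b2 Gf pa)"
  let ?T3 = "gcmp C (mtO V I X, mtO W J Y') (I,X') a1 a2 b3 ?Sq pa"
  let ?T2 = "gcmp C (mtO V X I, mtO W Y' J) (I,X') a1 a2 b3 (gcmp C (X,J) (I,Y') a2 a3 b3 Hf qa) pa"
  let ?T1 = "gcmp C (X,J) (mtO V I I, mtO W X' Y') a1 a3 b3 Hf (gcmp C (I,Y') (I,X') a1 a2 a3 qa pa)"
  have Ep: "gcmp C (X,J) (I,X') a1 a2 b2 Gf pa = gre C (mcomp V (minv V (mlu V X)) (mru V X), mcomp W (minv W (mlu W X')) (mru W X')) a1 b2 ?Sp"
    by (rule sq_solve) (use facts sp in \<open>simp_all add: I_def J_def\<close>)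
  have Eq: "gcmp C (X,J) (I,Y') a2 a3 b3 Hf qa = gre C (mcomp V (minv V (mlu V X)) (mru V X), mcomp W (minv W (mlu W Y')) (mru W Y')) a2 b3 ?Sq"
    by (rule sq_solve) (use facts sq in \<open>simp_all add: I_def J_def\<close>)
  have e7: "?T5 = gre C (minv V (masc V I I X), minv W (minv W (masc W J X' Y'))) a1 b3 ?T6"
    by (rule Cre_move) (use facts Cassoc[of X J I X' I Y' a1 b1 b2 b3 Ff pb qb] in \<open>simp_all add: I_def J_def\<close>)
  have e6: "?T4 = gre C (mtM V (mid V I) (mcomp V (minv V (mlu V X)) (mru V X)), mtM W (mcomp W (minv W (mlu W X')) (mru W X')) (mid W Y')) a1 b3 ?T5"
    unfolding Ep by (subst Ccmp_re2) (use facts in \<open>simp_all add: I_def J_def\<close>)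
  have e5: "?T3 = gre C (masc V I X I, minv W (masc W X' J Y')) a1 b3 ?T4"
    using facts Cassoc[of I X' X J I Y' a1 a2 b2 b3 pa Gf qb] by (simp add: I_def J_def)
  have e4: "?T2 = gre C (mtM V (mcomp V (minv V (mlu V X)) (mru V X)) (mid V I), mtM W (mid W X') (mcomp W (minv W (mlu W Y')) (mru W Y'))) a1 b3 ?T3"
    unfolding Eq by (subst Ccmp_re1) (use facts in \<open>simp_all add: I_def J_def\<close>)
  have e3: "?T1 = gre C (minv V (masc V X I I), minv W (minv W (masc W X' Y' J))) a1 b3 ?T2"
    by (rule Cre_move) (use facts Cassoc[of I X' I Y' X J a1 a2 a3 b3 pa qa Hf] in \<open>simp_all add: I_def J_def\<close>)
  have e2: "gcmp C (X,J) (I, mtO W X' Y') a1 a3 b3 Hf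
              (gre C (minv V (mlu V I), mid W (mtO W X' Y')) a1 a3 (gcmp C (I,Y') (I,X') a1 a2 a3 qa pa))
      = gre C (mtM V (mid V X) (minv V (mlu V I)), mtM W (mid W (mtO W X' Y')) (mid W J)) a1 b3 ?T1"
    by (subst Ccmp_re2) (use facts in \<open>simp_all add: I_def J_def\<close>)
  have e1: "gcmp C (I, mtO W X' Y') (X,J) a1 b1 b3
              (gre C (minv V (mlu V I), mid W (mtO W X' Y')) b1 b3 (gcmp C (I,Y') (I,X') b1 b2 b3 qb pb)) Ff
      = gre C (mtM V (minv V (mlu V I)) (mid V X), mtM W (mid W J) (mid W (mtO W X' Y'))) a1 b3 ?T6"
    by (subst Ccmp_re1) (use facts in \<open>simp_all add: I_def J_def\<close>)
  show ?thesis
    unfolding e1 e2 e3 e4 e5 e6 e7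
    using facts V.coh2[OF X] W.coh1[OF X' Y']
    by (simp add: I_def J_def V.assoc W.assoc)
qed


lemma hpaste:
  fixes I J
  defines "I \<equiv> munit V" and "J \<equiv> munit W"
  assumes X: "X \<in> mOb V" and Y: "Y \<in> mOb V" and X': "X' \<in> mOb W"
    and ob: "a1 \<in> gOb C" "b1 \<in> gOb C" "a2 \<in> gOb C" "b2 \<in> gOb C" "a3 \<in> gOb C" "b3 \<in> gOb C"
    and Fg: "Fg \<in> gHom C (I,X') a1 b1" and Gg: "Gg \<in> gHom C (I,X') a2 b2" and Hg: "Hg \<in> gHom C (I,X') a3 b3"
    and pa: "pa \<in> gHom C (X,J) a1 a2" and pb: "pb \<in> gHom C (X,J) b1 b2"
    and qa: "qa \<in> gHom C (Y,J) a2 a3" and qb: "qb \<in> gHom C (Y,J) b2 b3"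
    and sp: "gre C (minv V (mru V X), minv W (mru W X')) a1 b2 (gcmp C (X,J) (I,X') a1 b1 b2 pb Fg)
           = gre C (minv V (mlu V X), minv W (mlu W X')) a1 b2 (gcmp C (I,X') (X,J) a1 a2 b2 Gg pa)"
    and sq: "gre C (minv V (mru V Y), minv W (mru W X')) a2 b3 (gcmp C (Y,J) (I,X') a2 b2 b3 qb Gg)
           = gre C (minv V (mlu V Y), minv W (mlu W X')) a2 b3 (gcmp C (I,X') (Y,J) a2 a3 b3 Hg qa)"
  shows "gre C (minv V (mru V (mtO V Y X)), minv W (mru W X')) a1 b3
           (gcmp C (mtO V Y X, J) (I, X') a1 b1 b3
              (gre C (mid V (mtO V Y X), minv W (mlu W J)) b1 b3 (gcmp C (Y,J) (X,J) b1 b2 b3 qb pb)) Fg)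
       = gre C (minv V (mlu V (mtO V Y X)), minv W (mlu W X')) a1 b3
           (gcmp C (I, X') (mtO V Y X, J) a1 a3 b3 Hg
              (gre C (mid V (mtO V Y X), minv W (mlu W J)) a1 a3 (gcmp C (Y,J) (X,J) a1 a2 a3 qa pa)))"
proof -
  have I: "I \<in> mOb V" and J: "J \<in> mOb W" unfolding I_def J_def by simp_all
  note facts = X Y X' ob Fg Gg Hg pa pb qa qb I J
  let ?Sp = "gcmp C (I,X') (X,J) a1 a2 b2 Gg pa"
  let ?Sq = "gcmp C (I,X') (Y,J) a2 a3 b3 Hg qa"
  let ?T6 = "gcmp C (I,X') (mtO V Y X, mtO W J J) a1 a3 b3 Hg (gcmp C (Y,J) (X,J) a1 a2 a3 qa pa)"
  let ?T5 = "gcmp C (mtO V I Y, mtO W J X') (X,J) a1 a2 b3 ?Sq pa"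
  let ?T4 = "gcmp C (mtO V Y I, mtO W X' J) (X,J) a1 a2 b3 (gcmp C (Y,J) (I,X') a2 b2 b3 qb Gg) pa"
  let ?T3 = "gcmp C (Y,J) (mtO V I X, mtO W J X') a1 b2 b3 qb ?Sp"
  let ?T2 = "gcmp C (Y,J) (mtO V X I, mtO W X' J) a1 b2 b3 qb (gcmp C (X,J) (I,X') a1 b1 b2 pb Fg)"
  let ?T1 = "gcmp C (mtO V Y X, mtO W J J) (I,X') a1 b1 b3 (gcmp C (Y,J) (X,J) b1 b2 b3 qb pb) Fg"
  have Ep: "gcmp C (X,J) (I,X') a1 b1 b2 pb Fg = gre C (mcomp V (minv V (mlu V X)) (mru V X), mcomp W (minv W (mlu W X')) (mru W X')) a1 b2 ?Sp"
    by (rule sq_solve) (use facts sp in \<open>simp_all add: I_def J_def\<close>)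
  have Eq: "gcmp C (Y,J) (I,X') a2 b2 b3 qb Gg = gre C (mcomp V (minv V (mlu V Y)) (mru V Y), mcomp W (minv W (mlu W X')) (mru W X')) a2 b3 ?Sq"
    by (rule sq_solve) (use facts sq in \<open>simp_all add: I_def J_def\<close>)
  have e5: "?T5 = gre C (masc V I Y X, minv W (masc W J J X')) a1 b3 ?T6"
    using facts Cassoc[of X J Y J I X' a1 a2 a3 b3 pa qa Hg] by (simp add: I_def J_def)
  have e4: "?T4 = gre C (mtM V (mcomp V (minv V (mlu V Y)) (mru V Y)) (mid V X), mtM W (mid W J) (mcomp W (minv W (mlu W X')) (mru W X'))) a1 b3 ?T5"
    unfolding Eq by (subst Ccmp_re1) (use facts in \<open>simp_all add: I_def J_def\<close>)
  have e3: "?T3 = gre C (minv V (masc V Y I X), minv W (minv W (masc W J X' J))) a1 b3 ?T4"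
    by (rule Cre_move) (use facts Cassoc[of X J I X' Y J a1 a2 b2 b3 pa Gg qb] in \<open>simp_all add: I_def J_def\<close>)
  have e2: "?T2 = gre C (mtM V (mid V Y) (mcomp V (minv V (mlu V X)) (mru V X)), mtM W (mcomp W (minv W (mlu W X')) (mru W X')) (mid W J)) a1 b3 ?T3"
    unfolding Ep by (subst Ccmp_re2) (use facts in \<open>simp_all add: I_def J_def\<close>)
  have e1: "?T1 = gre C (masc V Y X I, minv W (masc W X' J J)) a1 b3 ?T2"
    using facts Cassoc[of I X' X J Y J a1 b1 b2 b3 Fg pb qb] by (simp add: I_def J_def)
  have l1: "gcmp C (mtO V Y X, J) (I, X') a1 b1 b3
              (gre C (mid V (mtO V Y X), minv W (mlu W J)) b1 b3 (gcmp C (Y,J) (X,J) b1 b2 b3 qb pb)) Fg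
     = gre C (mtM V (mid V (mtO V Y X)) (mid V I), mtM W (mid W X') (minv W (mlu W J))) a1 b3 ?T1"
    by (subst Ccmp_re1) (use facts in \<open>simp_all add: I_def J_def\<close>)
  have r1: "gcmp C (I, X') (mtO V Y X, J) a1 a3 b3 Hg
              (gre C (mid V (mtO V Y X), minv W (mlu W J)) a1 a3 (gcmp C (Y,J) (X,J) a1 a2 a3 qa pa))
     = gre C (mtM V (mid V I) (mid V (mtO V Y X)), mtM W (minv W (mlu W J)) (mid W X')) a1 b3 ?T6"
    by (subst Ccmp_re2) (use facts in \<open>simp_all add: I_def J_def\<close>)
  show ?thesis
    unfolding l1 r1 e1 e2 e3 e4 e5
    using facts V.coh1[OF Y X] W.coh2[OF X']
    by (simp add: I_def J_def V.assoc W.assoc)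
qed

end

context moncat begin
lemma coh3: "masc M (munit M) (munit M) (munit M) \<cdot> ((minv M (mlu M (munit M)) \<star> mid M (munit M)) \<cdot> minv M (mlu M (munit M)))
   = (mid M (munit M) \<star> minv M (mlu M (munit M))) \<cdot> minv M (mlu M (munit M))"
proof -
  let ?U = "munit M"
  have t: "minv M (masc M ?U ?U ?U) \<cdot> (mid M ?U \<star> minv M (mlu M ?U)) = minv M (mlu M ?U) \<star> mid M ?U"
    using Ti[of ?U ?U] K3 by simp
  have "masc M ?U ?U ?U \<cdot> ((minv M (mlu M ?U) \<star> mid M ?U) \<cdot> minv M (mlu M ?U))
      = masc M ?U ?U ?U \<cdot> ((minv M (masc M ?U ?U ?U) \<cdot> (mid M ?U \<star> minv M (mlu M ?U))) \<cdot> minv M (mlu M ?U))"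
    by (simp only: t)
  also have "\<dots> = (mid M ?U \<star> minv M (mlu M ?U)) \<cdot> minv M (mlu M ?U)"
    by (simp add: assoc[symmetric])
  finally show ?thesis .
qed

lemma coh3': "minv M (masc M (munit M) (munit M) (munit M)) \<cdot> ((mid M (munit M) \<star> minv M (mlu M (munit M))) \<cdot> minv M (mlu M (munit M)))
   = (minv M (mlu M (munit M)) \<star> mid M (munit M)) \<cdot> minv M (mlu M (munit M))"
proof -
  let ?U = "munit M"
  have t: "minv M (masc M ?U ?U ?U) \<cdot> (mid M ?U \<star> minv M (mlu M ?U)) = minv M (mlu M ?U) \<star> mid M ?U"
    using Ti[of ?U ?U] K3 by simp
  show ?thesis by (simp add: assoc[symmetric] t)
qed

lemma rl_U: "mcomp M (mru M (munit M)) (minv M (mlu M (munit M))) = mid M (munit M)"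
  using K3 by simp
end

context bigr begin

lemma sq_re_R:
  assumes b: "\<beta> \<in> mAr W" and X: "X \<in> mOb V"
    and ob: "a1 \<in> gOb C" "b1 \<in> gOb C" "a2 \<in> gOb C" "b2 \<in> gOb C"
    and s: "bsq V W C X (mcod W \<beta>) a1 b1 a2 b2 Ff Gf pa pb"
  shows "bsq V W C X (mdom W \<beta>) a1 b1 a2 b2 Ff Gf (gre C (mid V (munit V), \<beta>) a1 a2 pa) (gre C (mid V (munit V), \<beta>) b1 b2 pb)"
proof -
  let ?I = "munit V" and ?J = "munit W" and ?X' = "mcod W \<beta>" and ?Y' = "mdom W \<beta>"
  have m: "Ff \<in> gHom C (X, ?J) a1 b1" "Gf \<in> gHom C (X, ?J) a2 b2" "pa \<in> gHom C (?I, ?X') a1 a2" "pb \<in> gHom C (?I, ?X') b1 b2"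
    and e: "gre C (minv V (mru V X), minv W (mru W ?X')) a1 b2 (gcmp C (X, ?J) (?I, ?X') a1 a2 b2 Gf pa)
          = gre C (minv V (mlu V X), minv W (mlu W ?X')) a1 b2 (gcmp C (?I, ?X') (X, ?J) a1 b1 b2 pb Ff)"
    using s unfolding bsq_def by auto
  note facts = b X ob m
  have "gre C (minv V (mru V X), minv W (mru W ?Y')) a1 b2 (gcmp C (X, ?J) (?I, ?Y') a1 a2 b2 Gf (gre C (mid V ?I, \<beta>) a1 a2 pa))
      = gre C (minv V (mru V X), mcomp W (mtM W \<beta> (mid W ?J)) (minv W (mru W ?Y'))) a1 b2 (gcmp C (X, ?J) (?I, ?X') a1 a2 b2 Gf pa)"
    using facts by (subst Ccmp_re2) simp_all
  also have "\<dots> = gre C (minv V (mru V X), mcomp W (minv W (mru W ?X')) \<beta>) a1 b2 (gcmp C (X, ?J) (?I, ?X') a1 a2 b2 Gf pa)"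
    using W.r_inv_nat[OF b] by simp
  also have "\<dots> = gre C (mid V X, \<beta>) a1 b2 (gre C (minv V (mru V X), minv W (mru W ?X')) a1 b2 (gcmp C (X, ?J) (?I, ?X') a1 a2 b2 Gf pa))"
    using facts by (subst Cre_comp') simp_all
  also have "\<dots> = gre C (mid V X, \<beta>) a1 b2 (gre C (minv V (mlu V X), minv W (mlu W ?X')) a1 b2 (gcmp C (?I, ?X') (X, ?J) a1 b1 b2 pb Ff))"
    using e by simp
  also have "\<dots> = gre C (minv V (mlu V X), mcomp W (minv W (mlu W ?X')) \<beta>) a1 b2 (gcmp C (?I, ?X') (X, ?J) a1 b1 b2 pb Ff)"
    using facts by (subst Cre_comp') simp_all
  also have "\<dots> = gre C (minv V (mlu V X), mcomp W (mtM W (mid W ?J) \<beta>) (minv W (mlu W ?Y'))) a1 b2 (gcmp C (?I, ?X') (X, ?J) a1 b1 b2 pb Ff)"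
    using W.l_inv_nat[OF b] by simp
  also have "\<dots> = gre C (minv V (mlu V X), minv W (mlu W ?Y')) a1 b2 (gcmp C (?I, ?Y') (X, ?J) a1 b1 b2 (gre C (mid V ?I, \<beta>) b1 b2 pb) Ff)"
    using facts by (subst Ccmp_re1) simp_all
  finally show ?thesis unfolding bsq_def using facts by simp
qed

lemma sq_re_L:
  assumes a: "\<alpha> \<in> mAr V" and X': "X' \<in> mOb W"
    and ob: "a1 \<in> gOb C" "b1 \<in> gOb C" "a2 \<in> gOb C" "b2 \<in> gOb C"
    and s: "bsq V W C (mcod V \<alpha>) X' a1 a2 b1 b2 pa pb Fg Gg"
  shows "bsq V W C (mdom V \<alpha>) X' a1 a2 b1 b2 (gre C (\<alpha>, mid W (munit W)) a1 a2 pa) (gre C (\<alpha>, mid W (munit W)) b1 b2 pb) Fg Gg"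
proof -
  let ?I = "munit V" and ?J = "munit W" and ?X = "mcod V \<alpha>" and ?Y = "mdom V \<alpha>"
  have m: "pa \<in> gHom C (?X, ?J) a1 a2" "pb \<in> gHom C (?X, ?J) b1 b2" "Fg \<in> gHom C (?I, X') a1 b1" "Gg \<in> gHom C (?I, X') a2 b2"
    and e: "gre C (minv V (mru V ?X), minv W (mru W X')) a1 b2 (gcmp C (?X, ?J) (?I, X') a1 b1 b2 pb Fg)
          = gre C (minv V (mlu V ?X), minv W (mlu W X')) a1 b2 (gcmp C (?I, X') (?X, ?J) a1 a2 b2 Gg pa)"
    using s unfolding bsq_def by auto
  note facts = a X' ob m
  have "gre C (minv V (mru V ?Y), minv W (mru W X')) a1 b2 (gcmp C (?Y, ?J) (?I, X') a1 b1 b2 (gre C (\<alpha>, mid W ?J) b1 b2 pb) Fg)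
      = gre C (mcomp V (mtM V \<alpha> (mid V ?I)) (minv V (mru V ?Y)), minv W (mru W X')) a1 b2 (gcmp C (?X, ?J) (?I, X') a1 b1 b2 pb Fg)"
    using facts by (subst Ccmp_re1) simp_all
  also have "\<dots> = gre C (mcomp V (minv V (mru V ?X)) \<alpha>, minv W (mru W X')) a1 b2 (gcmp C (?X, ?J) (?I, X') a1 b1 b2 pb Fg)"
    using V.r_inv_nat[OF a] by simp
  also have "\<dots> = gre C (\<alpha>, mid W X') a1 b2 (gre C (minv V (mru V ?X), minv W (mru W X')) a1 b2 (gcmp C (?X, ?J) (?I, X') a1 b1 b2 pb Fg))"
    using facts by (subst Cre_comp') simp_all
  also have "\<dots> = gre C (\<alpha>, mid W X') a1 b2 (gre C (minv V (mlu V ?X), minv W (mlu W X')) a1 b2 (gcmp C (?I, X') (?X, ?J) a1 a2 b2 Gg pa))"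
    using e by simp
  also have "\<dots> = gre C (mcomp V (minv V (mlu V ?X)) \<alpha>, minv W (mlu W X')) a1 b2 (gcmp C (?I, X') (?X, ?J) a1 a2 b2 Gg pa)"
    using facts by (subst Cre_comp') simp_all
  also have "\<dots> = gre C (mcomp V (mtM V (mid V ?I) \<alpha>) (minv V (mlu V ?Y)), minv W (mlu W X')) a1 b2 (gcmp C (?I, X') (?X, ?J) a1 a2 b2 Gg pa)"
    using V.l_inv_nat[OF a] by simp
  also have "\<dots> = gre C (minv V (mlu V ?Y), minv W (mlu W X')) a1 b2 (gcmp C (?I, X') (?Y, ?J) a1 a2 b2 Gg (gre C (\<alpha>, mid W ?J) a1 a2 pa))"
    using facts by (subst Ccmp_re2) simp_all
  finally show ?thesis unfolding bsq_def using facts by simp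
qed

lemma sq_id_R:
  assumes X: "X \<in> mOb V" and ob: "a \<in> gOb C" "b \<in> gOb C" and f: "f \<in> gHom C (X, munit W) a b"
  shows "bsq V W C X (munit W) a b a b f f (gid C a) (gid C b)"
proof -
  have "gre C (minv V (mru V X), minv W (mru W (munit W))) a b (gcmp C (X, munit W) (munit V, munit W) a a b f (gid C a)) = f"
    using X ob f W.K3 by (simp add: Cunit_r Cre_id')
  moreover have "gre C (minv V (mlu V X), minv W (mlu W (munit W))) a b (gcmp C (munit V, munit W) (X, munit W) a b b (gid C b) f) = f"
    using X ob f W.K3 by (simp add: Cunit_l Cre_id')
  ultimately show ?thesis unfolding bsq_def using assms by simp
qed

lemma sq_id_L:
  assumes X': "X' \<in> mOb W" and ob: "a \<in> gOb C" "b \<in> gOb C" and f: "f \<in> gHom C (munit V, X') a b"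
  shows "bsq V W C (munit V) X' a a b b (gid C a) (gid C b) f f"
proof -
  have "gre C (minv V (mru V (munit V)), minv W (mru W X')) a b (gcmp C (munit V, munit W) (munit V, X') a b b (gid C b) f) = f"
    using X' ob f V.K3 by (simp add: Cunit_l Cre_id')
  moreover have "gre C (minv V (mlu V (munit V)), minv W (mlu W X')) a b (gcmp C (munit V, X') (munit V, munit W) a a b f (gid C a)) = f"
    using X' ob f V.K3 by (simp add: Cunit_r Cre_id')
  ultimately show ?thesis unfolding bsq_def using assms by simp
qed

end

lemma funR_simps:
  "gOb (funR V W A C) = {F. graded_functor V A (underV V W C) F \<and> gfun_ext V A F}"
  "gHom (funR V W A C) X' F G = {\<phi>. (\<forall>a. a \<notin> gOb A \<longrightarrow> \<phi> a = undefined) \<and> gtrans V W A C F G X' \<phi>}"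
  "gre (funR V W A C) \<beta> F G \<phi> a = (if a \<in> gOb A
              then gre C (mid V (munit V), \<beta>) (fob F a) (fob G a) (\<phi> a) else undefined)"
  "gcmp (funR V W A C) Y' X' F G H \<psi> \<phi> a = (if a \<in> gOb A
              then gre C (minv V (mlu V (munit V)), mid W (mtO W X' Y')) (fob F a) (fob H a)
                (gcmp C (munit V, Y') (munit V, X') (fob F a) (fob G a) (fob H a) (\<psi> a) (\<phi> a))
              else undefined)"
  "gid (funR V W A C) F a = (if a \<in> gOb A then gid C (fob F a) else undefined)"
  unfolding funR_def underW_def by simp_all

context bigr begin

abbreviation DR :: "('v, 'vm, 'a, 'ha) gcat \<Rightarrow> _" where "DR A \<equiv> funR V W A C"

lemma R_ob: "F \<in> gOb (DR A) \<Longrightarrow> a \<in> gOb A \<Longrightarrow> fob F a \<in> gOb C"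
  by (simp add: funR_simps graded_functor_def underV_def)
lemma R_mor: "F \<in> gOb (DR A) \<Longrightarrow> X \<in> mOb V \<Longrightarrow> a \<in> gOb A \<Longrightarrow> b \<in> gOb A \<Longrightarrow> f \<in> gHom A X a b \<Longrightarrow>
   fmor F X a b f \<in> gHom C (X, munit W) (fob F a) (fob F b)"
  by (simp add: funR_simps graded_functor_def underV_def)
lemma R_hom: "\<phi> \<in> gHom (DR A) X' F G \<Longrightarrow> a \<in> gOb A \<Longrightarrow> \<phi> a \<in> gHom C (munit V, X') (fob F a) (fob G a)"
  by (simp add: funR_simps gtrans_def)
lemma R_undef: "\<phi> \<in> gHom (DR A) X' F G \<Longrightarrow> a \<notin> gOb A \<Longrightarrow> \<phi> a = undefined"
  by (simp add: funR_simps)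
lemma R_sq: "\<phi> \<in> gHom (DR A) X' F G \<Longrightarrow> X \<in> mOb V \<Longrightarrow> a \<in> gOb A \<Longrightarrow> b \<in> gOb A \<Longrightarrow> f \<in> gHom A X a b \<Longrightarrow>
   bsq V W C X X' (fob F a) (fob F b) (fob G a) (fob G b) (fmor F X a b f) (fmor G X a b f) (\<phi> a) (\<phi> b)"
  by (simp add: funR_simps gtrans_def)

lemma R1:
  assumes b: "\<beta> \<in> mAr W" and F: "F \<in> gOb (DR A)" and G: "G \<in> gOb (DR A)" and p: "\<phi> \<in> gHom (DR A) (mcod W \<beta>) F G"
  shows "gre (DR A) \<beta> F G \<phi> \<in> gHom (DR A) (mdom W \<beta>) F G"
  unfolding funR_simps(2) gtrans_def
proof (intro CollectI conjI ballI allI impI)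
  fix a assume "a \<notin> gOb A" then show "gre (DR A) \<beta> F G \<phi> a = undefined" by (simp add: funR_simps)
next
  fix a assume a: "a \<in> gOb A"
  then show "gre (DR A) \<beta> F G \<phi> a \<in> gHom C (munit V, mdom W \<beta>) (fob F a) (fob G a)"
    using R_hom[OF p a] R_ob[OF F a] R_ob[OF G a] b by (simp add: funR_simps)
next
  fix X a b f assume X: "X \<in> mOb V" and a: "a \<in> gOb A" and bb: "b \<in> gOb A" and f: "f \<in> gHom A X a b"
  show "bsq V W C X (mdom W \<beta>) (fob F a) (fob F b) (fob G a) (fob G b) (fmor F X a b f) (fmor G X a b f)
        (gre (DR A) \<beta> F G \<phi> a) (gre (DR A) \<beta> F G \<phi> b)"
    using sq_re_R[OF b X R_ob[OF F a] R_ob[OF F bb] R_ob[OF G a] R_ob[OF G bb] R_sq[OF p X a bb f]] a bb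
    by (simp add: funR_simps)
qed

lemma R2:
  assumes X': "X' \<in> mOb W" and F: "F \<in> gOb (DR A)" and G: "G \<in> gOb (DR A)" and p: "\<phi> \<in> gHom (DR A) X' F G"
  shows "gre (DR A) (mid W X') F G \<phi> = \<phi>"
proof
  fix a show "gre (DR A) (mid W X') F G \<phi> a = \<phi> a"
    using R_hom[OF p] R_ob[OF F] R_ob[OF G] R_undef[OF p] X' by (simp add: funR_simps Cre_id')
qed

lemma R3:
  assumes a: "\<alpha> \<in> mAr W" and b: "\<beta> \<in> mAr W" and e: "mcod W \<beta> = mdom W \<alpha>"
    and F: "F \<in> gOb (DR A)" and G: "G \<in> gOb (DR A)" and p: "\<phi> \<in> gHom (DR A) (mcod W \<alpha>) F G"
  shows "gre (DR A) (mcomp W \<alpha> \<beta>) F G \<phi> = gre (DR A) \<beta> F G (gre (DR A) \<alpha> F G \<phi>)"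
proof
  fix x show "gre (DR A) (mcomp W \<alpha> \<beta>) F G \<phi> x = gre (DR A) \<beta> F G (gre (DR A) \<alpha> F G \<phi>) x"
    using R_hom[OF p] R_ob[OF F] R_ob[OF G] a b e by (simp add: funR_simps)
qed

lemma R4:
  assumes X': "X' \<in> mOb W" and Y': "Y' \<in> mOb W"
    and F: "F \<in> gOb (DR A)" and G: "G \<in> gOb (DR A)" and H: "H \<in> gOb (DR A)"
    and p: "\<phi> \<in> gHom (DR A) X' F G" and q: "\<psi> \<in> gHom (DR A) Y' G H"
  shows "gcmp (DR A) Y' X' F G H \<psi> \<phi> \<in> gHom (DR A) (mtO W X' Y') F H"
  unfolding funR_simps(2) gtrans_def
proof (intro CollectI conjI ballI allI impI)
  fix a assume "a \<notin> gOb A" then show "gcmp (DR A) Y' X' F G H \<psi> \<phi> a = undefined" by (simp add: funR_simps)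
next
  fix a assume a: "a \<in> gOb A"
  then show "gcmp (DR A) Y' X' F G H \<psi> \<phi> a \<in> gHom C (munit V, mtO W X' Y') (fob F a) (fob H a)"
    using R_hom[OF p a] R_hom[OF q a] R_ob[OF F a] R_ob[OF G a] R_ob[OF H a] X' Y' by (simp add: funR_simps)
next
  fix X a b f assume X: "X \<in> mOb V" and a: "a \<in> gOb A" and bb: "b \<in> gOb A" and f: "f \<in> gHom A X a b"
  have sp: "bsq V W C X X' (fob F a) (fob F b) (fob G a) (fob G b) (fmor F X a b f) (fmor G X a b f) (\<phi> a) (\<phi> b)"
    by (rule R_sq[OF p X a bb f])
  have sq: "bsq V W C X Y' (fob G a) (fob G b) (fob H a) (fob H b) (fmor G X a b f) (fmor H X a b f) (\<psi> a) (\<psi> b)"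
    by (rule R_sq[OF q X a bb f])
  note facts = X X' Y' R_ob[OF F a] R_ob[OF F bb] R_ob[OF G a] R_ob[OF G bb] R_ob[OF H a] R_ob[OF H bb]
    R_mor[OF F X a bb f] R_mor[OF G X a bb f] R_mor[OF H X a bb f]
    R_hom[OF p a] R_hom[OF p bb] R_hom[OF q a] R_hom[OF q bb]
  have eq: "gre C (minv V (mru V X), minv W (mru W (mtO W X' Y'))) (fob F a) (fob H b)
           (gcmp C (X, munit W) (munit V, mtO W X' Y') (fob F a) (fob H a) (fob H b) (fmor H X a b f)
              (gre C (minv V (mlu V (munit V)), mid W (mtO W X' Y')) (fob F a) (fob H a) (gcmp C (munit V,Y') (munit V,X') (fob F a) (fob G a) (fob H a) (\<psi> a) (\<phi> a))))
       = gre C (minv V (mlu V X), minv W (mlu W (mtO W X' Y'))) (fob F a) (fob H b)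
           (gcmp C (munit V, mtO W X' Y') (X, munit W) (fob F a) (fob F b) (fob H b)
              (gre C (minv V (mlu V (munit V)), mid W (mtO W X' Y')) (fob F b) (fob H b) (gcmp C (munit V,Y') (munit V,X') (fob F b) (fob G b) (fob H b) (\<psi> b) (\<phi> b))) (fmor F X a b f))"
    by (rule vpaste) (use facts sp sq in \<open>simp_all add: bsq_def\<close>)
  show "bsq V W C X (mtO W X' Y') (fob F a) (fob F b) (fob H a) (fob H b) (fmor F X a b f) (fmor H X a b f)
        (gcmp (DR A) Y' X' F G H \<psi> \<phi> a) (gcmp (DR A) Y' X' F G H \<psi> \<phi> b)"
    unfolding bsq_def using facts eq a bb by (simp add: funR_simps)
qed

lemma R5:
  assumes F: "F \<in> gOb (DR A)"
  shows "gid (DR A) F \<in> gHom (DR A) (munit W) F F"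
  unfolding funR_simps(2) gtrans_def
proof (intro CollectI conjI ballI allI impI)
  fix a assume "a \<notin> gOb A" then show "gid (DR A) F a = undefined" by (simp add: funR_simps)
next
  fix a assume a: "a \<in> gOb A"
  then show "gid (DR A) F a \<in> gHom C (munit V, munit W) (fob F a) (fob F a)"
    using R_ob[OF F a] by (simp add: funR_simps)
next
  fix X a b f assume X: "X \<in> mOb V" and a: "a \<in> gOb A" and bb: "b \<in> gOb A" and f: "f \<in> gHom A X a b"
  show "bsq V W C X (munit W) (fob F a) (fob F b) (fob F a) (fob F b) (fmor F X a b f) (fmor F X a b f)
        (gid (DR A) F a) (gid (DR A) F b)"
    using sq_id_R[OF X R_ob[OF F a] R_ob[OF F bb] R_mor[OF F X a bb f]] a bb by (simp add: funR_simps)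
qed

lemma R6:
  assumes a: "\<alpha> \<in> mAr W" and b: "\<beta> \<in> mAr W"
    and F: "F \<in> gOb (DR A)" and G: "G \<in> gOb (DR A)" and H: "H \<in> gOb (DR A)"
    and p: "\<phi> \<in> gHom (DR A) (mcod W \<alpha>) F G" and q: "\<psi> \<in> gHom (DR A) (mcod W \<beta>) G H"
  shows "gcmp (DR A) (mdom W \<beta>) (mdom W \<alpha>) F G H (gre (DR A) \<beta> G H \<psi>) (gre (DR A) \<alpha> F G \<phi>)
       = gre (DR A) (mtM W \<alpha> \<beta>) F H (gcmp (DR A) (mcod W \<beta>) (mcod W \<alpha>) F G H \<psi> \<phi>)"
proof
  fix x show "gcmp (DR A) (mdom W \<beta>) (mdom W \<alpha>) F G H (gre (DR A) \<beta> G H \<psi>) (gre (DR A) \<alpha> F G \<phi>) x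
       = gre (DR A) (mtM W \<alpha> \<beta>) F H (gcmp (DR A) (mcod W \<beta>) (mcod W \<alpha>) F G H \<psi> \<phi>) x"
  proof (cases "x \<in> gOb A")
    case True
    note facts = a b R_ob[OF F True] R_ob[OF G True] R_ob[OF H True] R_hom[OF p True] R_hom[OF q True]
    have "gcmp C (munit V, mdom W \<beta>) (munit V, mdom W \<alpha>) (fob F x) (fob G x) (fob H x)
            (gre C (mid V (munit V), \<beta>) (fob G x) (fob H x) (\<psi> x)) (gre C (mid V (munit V), \<alpha>) (fob F x) (fob G x) (\<phi> x))
        = gre C (mtM V (mid V (munit V)) (mid V (munit V)), mtM W \<alpha> \<beta>) (fob F x) (fob H x)
            (gcmp C (munit V, mcod W \<beta>) (munit V, mcod W \<alpha>) (fob F x) (fob G x) (fob H x) (\<psi> x) (\<phi> x))"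
      using Ccmp_re[of "mid V (munit V)" \<alpha> "mid V (munit V)" \<beta> "fob F x" "fob G x" "fob H x" "\<phi> x" "\<psi> x"] facts by simp
    then show ?thesis using True facts by (simp add: funR_simps)
  next
    case False then show ?thesis by (simp add: funR_simps)
  qed
qed

lemma R7:
  assumes X': "X' \<in> mOb W" and Y': "Y' \<in> mOb W" and Z': "Z' \<in> mOb W"
    and F: "F \<in> gOb (DR A)" and G: "G \<in> gOb (DR A)" and H: "H \<in> gOb (DR A)" and K: "K \<in> gOb (DR A)"
    and f: "f \<in> gHom (DR A) X' F G" and g: "g \<in> gHom (DR A) Y' G H" and h: "h \<in> gHom (DR A) Z' H K"
  shows "gcmp (DR A) (mtO W Y' Z') X' F G K (gcmp (DR A) Z' Y' G H K h g) f
       = gre (DR A) (minv W (masc W X' Y' Z')) F K (gcmp (DR A) Z' (mtO W X' Y') F H K h (gcmp (DR A) Y' X' F G H g f))"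
proof
  fix x show "gcmp (DR A) (mtO W Y' Z') X' F G K (gcmp (DR A) Z' Y' G H K h g) f x
       = gre (DR A) (minv W (masc W X' Y' Z')) F K (gcmp (DR A) Z' (mtO W X' Y') F H K h (gcmp (DR A) Y' X' F G H g f)) x"
  proof (cases "x \<in> gOb A")
    case True
    let ?I = "munit V"
    note facts = X' Y' Z' R_ob[OF F True] R_ob[OF G True] R_ob[OF H True] R_ob[OF K True]
      R_hom[OF f True] R_hom[OF g True] R_hom[OF h True]
    have L: "gre C (minv V (mlu V ?I), mid W (mtO W X' (mtO W Y' Z'))) (fob F x) (fob K x)
          (gcmp C (?I, mtO W Y' Z') (?I, X') (fob F x) (fob G x) (fob K x)
             (gre C (minv V (mlu V ?I), mid W (mtO W Y' Z')) (fob G x) (fob K x)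
                (gcmp C (?I, Z') (?I, Y') (fob G x) (fob H x) (fob K x) (h x) (g x))) (f x))
      = gre C (mcomp V (masc V ?I ?I ?I) (mcomp V (mtM V (minv V (mlu V ?I)) (mid V ?I)) (minv V (mlu V ?I))),
               minv W (masc W X' Y' Z')) (fob F x) (fob K x)
          (gcmp C (?I, Z') (mtO V ?I ?I, mtO W X' Y') (fob F x) (fob H x) (fob K x) (h x)
             (gcmp C (?I, Y') (?I, X') (fob F x) (fob G x) (fob H x) (g x) (f x)))"
      apply (subst Ccmp_re1)
      using facts apply simp_all
      apply (subst Cassoc)
      using facts by (simp_all add: V.assoc)
    have R: "gre C (mid V ?I, minv W (masc W X' Y' Z')) (fob F x) (fob K x)
          (gre C (minv V (mlu V ?I), mid W (mtO W (mtO W X' Y') Z')) (fob F x) (fob K x)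
            (gcmp C (?I, Z') (?I, mtO W X' Y') (fob F x) (fob H x) (fob K x) (h x)
              (gre C (minv V (mlu V ?I), mid W (mtO W X' Y')) (fob F x) (fob H x)
                (gcmp C (?I, Y') (?I, X') (fob F x) (fob G x) (fob H x) (g x) (f x)))))
      = gre C (mcomp V (mtM V (mid V ?I) (minv V (mlu V ?I))) (minv V (mlu V ?I)),
               minv W (masc W X' Y' Z')) (fob F x) (fob K x)
          (gcmp C (?I, Z') (mtO V ?I ?I, mtO W X' Y') (fob F x) (fob H x) (fob K x) (h x)
             (gcmp C (?I, Y') (?I, X') (fob F x) (fob G x) (fob H x) (g x) (f x)))"
      apply (subst Ccmp_re2)
      using facts by simp_all
    show ?thesis using True L R V.coh3 by (simp add: funR_simps)
  next
    case False then show ?thesis by (simp add: funR_simps)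
  qed
qed

lemma R8:
  assumes X': "X' \<in> mOb W" and F: "F \<in> gOb (DR A)" and G: "G \<in> gOb (DR A)" and f: "f \<in> gHom (DR A) X' F G"
  shows "gcmp (DR A) X' (munit W) F F G f (gid (DR A) F) = gre (DR A) (mlu W X') F G f \<and>
         gcmp (DR A) (munit W) X' F G G (gid (DR A) G) f = gre (DR A) (mru W X') F G f"
proof (intro conjI ext)
  fix x show "gcmp (DR A) X' (munit W) F F G f (gid (DR A) F) x = gre (DR A) (mlu W X') F G f x"
    using R_ob[OF F] R_ob[OF G] R_hom[OF f] X' V.rl_U by (simp add: funR_simps Cunit_r)
next
  fix x show "gcmp (DR A) (munit W) X' F G G (gid (DR A) G) f x = gre (DR A) (mru W X') F G f x"
    using R_ob[OF F] R_ob[OF G] R_hom[OF f] X' by (simp add: funR_simps Cunit_l)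
qed

lemma part1: "graded_cat (revM W) (DR A)"
  unfolding graded_cat_def revM_simps
  apply (intro conjI ballI allI impI)
  apply (rule R1; assumption)
  apply (rule R2; assumption)
  apply (rule R3; assumption)
  apply (rule R4; assumption)
  apply (rule R5; assumption)
  apply (rule R6; assumption)
  apply (rule R7; assumption)
  apply (rule R8[THEN conjunct1]; assumption)
  apply (rule R8[THEN conjunct2]; assumption)
  done

end

lemma funL_simps:
  "gOb (funL V W B C) = {F. graded_functor (revM W) B (underW V W C) F \<and> gfun_ext (revM W) B F}"
  "gHom (funL V W B C) X F G = {\<phi>. (\<forall>b. b \<notin> gOb B \<longrightarrow> \<phi> b = undefined) \<and>
              (\<forall>b\<in>gOb B. \<phi> b \<in> gHom C (X, munit W) (fob F b) (fob G b)) \<and>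
              (\<forall>X'\<in>mOb W. \<forall>b\<in>gOb B. \<forall>b'\<in>gOb B. \<forall>g\<in>gHom B X' b b'.
                 bsq V W C X X' (fob F b) (fob G b) (fob F b') (fob G b')
                   (\<phi> b) (\<phi> b') (fmor F X' b b' g) (fmor G X' b b' g))}"
  "gre (funL V W B C) \<alpha> F G \<phi> b = (if b \<in> gOb B
              then gre C (\<alpha>, mid W (munit W)) (fob F b) (fob G b) (\<phi> b) else undefined)"
  "gcmp (funL V W B C) Y X F G H \<psi> \<phi> b = (if b \<in> gOb B
              then gre C (mid V (mtO V Y X), minv W (mlu W (munit W))) (fob F b) (fob H b)
                (gcmp C (Y, munit W) (X, munit W) (fob F b) (fob G b) (fob H b) (\<psi> b) (\<phi> b))
              else undefined)"
  "gid (funL V W B C) F b = (if b \<in> gOb B then gid C (fob F b) else undefined)"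
  unfolding funL_def underV_def by simp_all

context bigr begin

abbreviation DL :: "('w, 'wm, 'b, 'hb) gcat \<Rightarrow> _" where "DL B \<equiv> funL V W B C"

lemma L_ob: "F \<in> gOb (DL B) \<Longrightarrow> b \<in> gOb B \<Longrightarrow> fob F b \<in> gOb C"
  by (simp add: funL_simps graded_functor_def underW_def)
lemma L_mor: "F \<in> gOb (DL B) \<Longrightarrow> X' \<in> mOb W \<Longrightarrow> b \<in> gOb B \<Longrightarrow> b' \<in> gOb B \<Longrightarrow> g \<in> gHom B X' b b' \<Longrightarrow>
   fmor F X' b b' g \<in> gHom C (munit V, X') (fob F b) (fob F b')"
  by (simp add: funL_simps graded_functor_def underW_def)
lemma L_hom: "\<phi> \<in> gHom (DL B) X F G \<Longrightarrow> b \<in> gOb B \<Longrightarrow> \<phi> b \<in> gHom C (X, munit W) (fob F b) (fob G b)"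
  by (simp add: funL_simps)
lemma L_undef: "\<phi> \<in> gHom (DL B) X F G \<Longrightarrow> b \<notin> gOb B \<Longrightarrow> \<phi> b = undefined"
  by (simp add: funL_simps)
lemma L_sq: "\<phi> \<in> gHom (DL B) X F G \<Longrightarrow> X' \<in> mOb W \<Longrightarrow> b \<in> gOb B \<Longrightarrow> b' \<in> gOb B \<Longrightarrow> g \<in> gHom B X' b b' \<Longrightarrow>
   bsq V W C X X' (fob F b) (fob G b) (fob F b') (fob G b') (\<phi> b) (\<phi> b') (fmor F X' b b' g) (fmor G X' b b' g)"
  by (simp add: funL_simps)

lemma L1:
  assumes a: "\<alpha> \<in> mAr V" and F: "F \<in> gOb (DL B)" and G: "G \<in> gOb (DL B)" and p: "\<phi> \<in> gHom (DL B) (mcod V \<alpha>) F G"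
  shows "gre (DL B) \<alpha> F G \<phi> \<in> gHom (DL B) (mdom V \<alpha>) F G"
  unfolding funL_simps(2)
proof (intro CollectI conjI ballI allI impI)
  fix b assume "b \<notin> gOb B" then show "gre (DL B) \<alpha> F G \<phi> b = undefined" by (simp add: funL_simps)
next
  fix b assume b: "b \<in> gOb B"
  then show "gre (DL B) \<alpha> F G \<phi> b \<in> gHom C (mdom V \<alpha>, munit W) (fob F b) (fob G b)"
    using L_hom[OF p b] L_ob[OF F b] L_ob[OF G b] a by (simp add: funL_simps)
next
  fix X' b b' g assume X': "X' \<in> mOb W" and b: "b \<in> gOb B" and bb: "b' \<in> gOb B" and g: "g \<in> gHom B X' b b'"
  show "bsq V W C (mdom V \<alpha>) X' (fob F b) (fob G b) (fob F b') (fob G b') (gre (DL B) \<alpha> F G \<phi> b) (gre (DL B) \<alpha> F G \<phi> b')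
         (fmor F X' b b' g) (fmor G X' b b' g)"
    using sq_re_L[OF a X' L_ob[OF F b] L_ob[OF F bb] L_ob[OF G b] L_ob[OF G bb] L_sq[OF p X' b bb g]] b bb
    by (simp add: funL_simps)
qed

lemma L2:
  assumes X: "X \<in> mOb V" and F: "F \<in> gOb (DL B)" and G: "G \<in> gOb (DL B)" and p: "\<phi> \<in> gHom (DL B) X F G"
  shows "gre (DL B) (mid V X) F G \<phi> = \<phi>"
proof
  fix b show "gre (DL B) (mid V X) F G \<phi> b = \<phi> b"
    using L_hom[OF p] L_ob[OF F] L_ob[OF G] L_undef[OF p] X by (simp add: funL_simps Cre_id')
qed

lemma L3:
  assumes a: "\<alpha> \<in> mAr V" and b: "\<beta> \<in> mAr V" and e: "mcod V \<beta> = mdom V \<alpha>"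
    and F: "F \<in> gOb (DL B)" and G: "G \<in> gOb (DL B)" and p: "\<phi> \<in> gHom (DL B) (mcod V \<alpha>) F G"
  shows "gre (DL B) (mcomp V \<alpha> \<beta>) F G \<phi> = gre (DL B) \<beta> F G (gre (DL B) \<alpha> F G \<phi>)"
proof
  fix x show "gre (DL B) (mcomp V \<alpha> \<beta>) F G \<phi> x = gre (DL B) \<beta> F G (gre (DL B) \<alpha> F G \<phi>) x"
    using L_hom[OF p] L_ob[OF F] L_ob[OF G] a b e by (simp add: funL_simps)
qed

lemma L4:
  assumes X: "X \<in> mOb V" and Y: "Y \<in> mOb V"
    and F: "F \<in> gOb (DL B)" and G: "G \<in> gOb (DL B)" and H: "H \<in> gOb (DL B)"
    and p: "\<phi> \<in> gHom (DL B) X F G" and q: "\<psi> \<in> gHom (DL B) Y G H"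
  shows "gcmp (DL B) Y X F G H \<psi> \<phi> \<in> gHom (DL B) (mtO V Y X) F H"
  unfolding funL_simps(2)
proof (intro CollectI conjI ballI allI impI)
  fix b assume "b \<notin> gOb B" then show "gcmp (DL B) Y X F G H \<psi> \<phi> b = undefined" by (simp add: funL_simps)
next
  fix b assume b: "b \<in> gOb B"
  then show "gcmp (DL B) Y X F G H \<psi> \<phi> b \<in> gHom C (mtO V Y X, munit W) (fob F b) (fob H b)"
    using L_hom[OF p b] L_hom[OF q b] L_ob[OF F b] L_ob[OF G b] L_ob[OF H b] X Y by (simp add: funL_simps)
next
  fix X' b b' g assume X': "X' \<in> mOb W" and b: "b \<in> gOb B" and bb: "b' \<in> gOb B" and g: "g \<in> gHom B X' b b'"
  have sp: "bsq V W C X X' (fob F b) (fob G b) (fob F b') (fob G b') (\<phi> b) (\<phi> b') (fmor F X' b b' g) (fmor G X' b b' g)"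
    by (rule L_sq[OF p X' b bb g])
  have sq: "bsq V W C Y X' (fob G b) (fob H b) (fob G b') (fob H b') (\<psi> b) (\<psi> b') (fmor G X' b b' g) (fmor H X' b b' g)"
    by (rule L_sq[OF q X' b bb g])
  note facts = X Y X' L_ob[OF F b] L_ob[OF F bb] L_ob[OF G b] L_ob[OF G bb] L_ob[OF H b] L_ob[OF H bb]
    L_mor[OF F X' b bb g] L_mor[OF G X' b bb g] L_mor[OF H X' b bb g]
    L_hom[OF p b] L_hom[OF p bb] L_hom[OF q b] L_hom[OF q bb]
  have eq: "gre C (minv V (mru V (mtO V Y X)), minv W (mru W X')) (fob F b) (fob H b')
           (gcmp C (mtO V Y X, munit W) (munit V, X') (fob F b) (fob F b') (fob H b')
              (gre C (mid V (mtO V Y X), minv W (mlu W (munit W))) (fob F b') (fob H b')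
                 (gcmp C (Y, munit W) (X, munit W) (fob F b') (fob G b') (fob H b') (\<psi> b') (\<phi> b'))) (fmor F X' b b' g))
       = gre C (minv V (mlu V (mtO V Y X)), minv W (mlu W X')) (fob F b) (fob H b')
           (gcmp C (munit V, X') (mtO V Y X, munit W) (fob F b) (fob H b) (fob H b') (fmor H X' b b' g)
              (gre C (mid V (mtO V Y X), minv W (mlu W (munit W))) (fob F b) (fob H b)
                 (gcmp C (Y, munit W) (X, munit W) (fob F b) (fob G b) (fob H b) (\<psi> b) (\<phi> b))))"
    by (rule hpaste) (use facts sp sq in \<open>simp_all add: bsq_def\<close>)
  show "bsq V W C (mtO V Y X) X' (fob F b) (fob H b) (fob F b') (fob H b') (gcmp (DL B) Y X F G H \<psi> \<phi> b) (gcmp (DL B) Y X F G H \<psi> \<phi> b')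
        (fmor F X' b b' g) (fmor H X' b b' g)"
    unfolding bsq_def using facts eq b bb by (simp add: funL_simps)
qed

lemma L5:
  assumes F: "F \<in> gOb (DL B)"
  shows "gid (DL B) F \<in> gHom (DL B) (munit V) F F"
  unfolding funL_simps(2)
proof (intro CollectI conjI ballI allI impI)
  fix b assume "b \<notin> gOb B" then show "gid (DL B) F b = undefined" by (simp add: funL_simps)
next
  fix b assume b: "b \<in> gOb B"
  then show "gid (DL B) F b \<in> gHom C (munit V, munit W) (fob F b) (fob F b)"
    using L_ob[OF F b] by (simp add: funL_simps)
next
  fix X' b b' g assume X': "X' \<in> mOb W" and b: "b \<in> gOb B" and bb: "b' \<in> gOb B" and g: "g \<in> gHom B X' b b'"
  show "bsq V W C (munit V) X' (fob F b) (fob F b) (fob F b') (fob F b') (gid (DL B) F b) (gid (DL B) F b')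
        (fmor F X' b b' g) (fmor F X' b b' g)"
    using sq_id_L[OF X' L_ob[OF F b] L_ob[OF F bb] L_mor[OF F X' b bb g]] b bb by (simp add: funL_simps)
qed

lemma L6:
  assumes a: "\<alpha> \<in> mAr V" and b: "\<beta> \<in> mAr V"
    and F: "F \<in> gOb (DL B)" and G: "G \<in> gOb (DL B)" and H: "H \<in> gOb (DL B)"
    and p: "\<phi> \<in> gHom (DL B) (mcod V \<alpha>) F G" and q: "\<psi> \<in> gHom (DL B) (mcod V \<beta>) G H"
  shows "gcmp (DL B) (mdom V \<beta>) (mdom V \<alpha>) F G H (gre (DL B) \<beta> G H \<psi>) (gre (DL B) \<alpha> F G \<phi>)
       = gre (DL B) (mtM V \<beta> \<alpha>) F H (gcmp (DL B) (mcod V \<beta>) (mcod V \<alpha>) F G H \<psi> \<phi>)"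
proof
  fix x show "gcmp (DL B) (mdom V \<beta>) (mdom V \<alpha>) F G H (gre (DL B) \<beta> G H \<psi>) (gre (DL B) \<alpha> F G \<phi>) x
       = gre (DL B) (mtM V \<beta> \<alpha>) F H (gcmp (DL B) (mcod V \<beta>) (mcod V \<alpha>) F G H \<psi> \<phi>) x"
  proof (cases "x \<in> gOb B")
    case True
    note facts = a b L_ob[OF F True] L_ob[OF G True] L_ob[OF H True] L_hom[OF p True] L_hom[OF q True]
    have "gcmp C (mdom V \<beta>, munit W) (mdom V \<alpha>, munit W) (fob F x) (fob G x) (fob H x)
            (gre C (\<beta>, mid W (munit W)) (fob G x) (fob H x) (\<psi> x)) (gre C (\<alpha>, mid W (munit W)) (fob F x) (fob G x) (\<phi> x))
        = gre C (mtM V \<beta> \<alpha>, mtM W (mid W (munit W)) (mid W (munit W))) (fob F x) (fob H x)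
            (gcmp C (mcod V \<beta>, munit W) (mcod V \<alpha>, munit W) (fob F x) (fob G x) (fob H x) (\<psi> x) (\<phi> x))"
      using Ccmp_re[of \<alpha> "mid W (munit W)" \<beta> "mid W (munit W)" "fob F x" "fob G x" "fob H x" "\<phi> x" "\<psi> x"] facts by simp
    then show ?thesis using True facts by (simp add: funL_simps)
  next
    case False then show ?thesis by (simp add: funL_simps)
  qed
qed

lemma L7:
  assumes X: "X \<in> mOb V" and Y: "Y \<in> mOb V" and Z: "Z \<in> mOb V"
    and F: "F \<in> gOb (DL B)" and G: "G \<in> gOb (DL B)" and H: "H \<in> gOb (DL B)" and K: "K \<in> gOb (DL B)"
    and f: "f \<in> gHom (DL B) X F G" and g: "g \<in> gHom (DL B) Y G H" and h: "h \<in> gHom (DL B) Z H K"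
  shows "gcmp (DL B) (mtO V Z Y) X F G K (gcmp (DL B) Z Y G H K h g) f
       = gre (DL B) (masc V Z Y X) F K (gcmp (DL B) Z (mtO V Y X) F H K h (gcmp (DL B) Y X F G H g f))"
proof
  fix x show "gcmp (DL B) (mtO V Z Y) X F G K (gcmp (DL B) Z Y G H K h g) f x
       = gre (DL B) (masc V Z Y X) F K (gcmp (DL B) Z (mtO V Y X) F H K h (gcmp (DL B) Y X F G H g f)) x"
  proof (cases "x \<in> gOb B")
    case True
    let ?J = "munit W"
    note facts = X Y Z L_ob[OF F True] L_ob[OF G True] L_ob[OF H True] L_ob[OF K True]
      L_hom[OF f True] L_hom[OF g True] L_hom[OF h True]
    have L: "gre C (mid V (mtO V (mtO V Z Y) X), minv W (mlu W ?J)) (fob F x) (fob K x)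
          (gcmp C (mtO V Z Y, ?J) (X, ?J) (fob F x) (fob G x) (fob K x)
             (gre C (mid V (mtO V Z Y), minv W (mlu W ?J)) (fob G x) (fob K x)
                (gcmp C (Z, ?J) (Y, ?J) (fob G x) (fob H x) (fob K x) (h x) (g x))) (f x))
      = gre C (masc V Z Y X,
               mcomp W (minv W (masc W ?J ?J ?J)) (mcomp W (mtM W (mid W ?J) (minv W (mlu W ?J))) (minv W (mlu W ?J))))
           (fob F x) (fob K x)
          (gcmp C (Z, ?J) (mtO V Y X, mtO W ?J ?J) (fob F x) (fob H x) (fob K x) (h x)
             (gcmp C (Y, ?J) (X, ?J) (fob F x) (fob G x) (fob H x) (g x) (f x)))"
      apply (subst Ccmp_re1)
      using facts apply simp_all
      apply (subst Cassoc)
      using facts by (simp_all add: W.assoc)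
    have R: "gre C (masc V Z Y X, mid W ?J) (fob F x) (fob K x)
          (gre C (mid V (mtO V Z (mtO V Y X)), minv W (mlu W ?J)) (fob F x) (fob K x)
            (gcmp C (Z, ?J) (mtO V Y X, ?J) (fob F x) (fob H x) (fob K x) (h x)
              (gre C (mid V (mtO V Y X), minv W (mlu W ?J)) (fob F x) (fob H x)
                (gcmp C (Y, ?J) (X, ?J) (fob F x) (fob G x) (fob H x) (g x) (f x)))))
      = gre C (masc V Z Y X, mcomp W (mtM W (minv W (mlu W ?J)) (mid W ?J)) (minv W (mlu W ?J)))
           (fob F x) (fob K x)
          (gcmp C (Z, ?J) (mtO V Y X, mtO W ?J ?J) (fob F x) (fob H x) (fob K x) (h x)
             (gcmp C (Y, ?J) (X, ?J) (fob F x) (fob G x) (fob H x) (g x) (f x)))"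
      apply (subst Ccmp_re2)
      using facts by simp_all
    show ?thesis using True L R W.coh3' by (simp add: funL_simps)
  next
    case False then show ?thesis by (simp add: funL_simps)
  qed
qed

lemma L8:
  assumes X: "X \<in> mOb V" and F: "F \<in> gOb (DL B)" and G: "G \<in> gOb (DL B)" and f: "f \<in> gHom (DL B) X F G"
  shows "gcmp (DL B) X (munit V) F F G f (gid (DL B) F) = gre (DL B) (mru V X) F G f \<and>
         gcmp (DL B) (munit V) X F G G (gid (DL B) G) f = gre (DL B) (mlu V X) F G f"
proof (intro conjI ext)
  fix x show "gcmp (DL B) X (munit V) F F G f (gid (DL B) F) x = gre (DL B) (mru V X) F G f x"
    using L_ob[OF F] L_ob[OF G] L_hom[OF f] X by (simp add: funL_simps Cunit_r)
next
  fix x show "gcmp (DL B) (munit V) X F G G (gid (DL B) G) f x = gre (DL B) (mlu V X) F G f x"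
    using L_ob[OF F] L_ob[OF G] L_hom[OF f] X W.rl_U by (simp add: funL_simps Cunit_l)
qed

lemma part2: "graded_cat V (DL B)"
  unfolding graded_cat_def
  apply (intro conjI ballI allI impI)
  apply (rule L1; assumption)
  apply (rule L2; assumption)
  apply (rule L3; assumption)
  apply (rule L4; assumption)
  apply (rule L5; assumption)
  apply (rule L6; assumption)
  apply (rule L7; assumption)
  apply (rule L8[THEN conjunct1]; assumption)
  apply (rule L8[THEN conjunct2]; assumption)
  done

end

theorem theorem8p3:
  fixes V :: "('v, 'vm) mcat" and W :: "('w, 'wm) mcat"
    and C :: "('v \<times> 'w, 'vm \<times> 'wm, 'c, 'h) gcat"
    and A :: "('v, 'vm, 'a, 'ha) gcat"
    and B :: "('w, 'wm, 'b, 'hb) gcat"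
  assumes "monoidal_cat V" and "monoidal_cat W"
    and "graded_cat (prodM V (revM W)) C"
  shows "(graded_cat V A \<longrightarrow> graded_cat (revM W) (funR V W A C))
       \<and> (graded_cat (revM W) B \<longrightarrow> graded_cat V (funL V W B C))"
proof -
  interpret bigr V W C
    using assms by (simp add: bigr_def bigr_axioms_def moncat_def)
  show ?thesis using part1 part2 by blast
qed

end
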